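(* Let $(H,\Delta)$ be a Hopf algebra with invariant functionals $\varphi,\psi=\varphi\circ S$ and modular element $\delta$, and let $(A,\alpha)$ be an $I$-Galois object. Then the functional $\varphi_A:A\to k$ is faithful, i.e. the pairing $A\times A\to k$, $(a,a')\mapsto\varphi_A(aa')$, is non-degenerate, and it is $\delta$-invariant: $(\varphi_A\otimes\mathrm{id})\alpha(a)=\varphi_A(a)\delta$ for all $a\in A$.
   Context: $H$ has invariant functionals: nonzero $\varphi,\psi:H\to k$ with $(\mathrm{id}\otimes\varphi)\Delta(h)=\varphi(h)1$, $(\psi\otimes\mathrm{id})\Delta(h)=\psi(h)1$; one may take $\psi=\varphi\circ S$. The modular element $\delta$ is the unique invertible grouplike element of $H$ with $\varphi(S(h))=\varphi(h\delta)$ for all $h$. An $I$-Galois object is a right $H$-comodule algebra $(A,\alpha)$ (possibly non-unital) with bijective Galois map $A\otimes_{A^\alpha}A\to A\otimes H$, $a\otimes b\mapsto(a\otimes1)\alpha(b)$, and coinvariant algebra $A^\alpha$ identified with $k_I=\bigoplus_{i\in I}k$, minimal idempotents $p_i$. $\Phi:A\to A^\alpha$, $\Phi(a)=(\mathrm{id}\otimes\varphi)\alpha(a)$; $\varphi_i:A\to k$ defined by $\Phi(a)=\sum_i\varphi_i(p_iap_i)p_i$ and $\varphi_i(a):=\varphi_i(p_iap_i)$; $\mathscr S:A^\alpha\to k$, $\sum_ia_ip_i\mapsto\sum_ia_i$; and $\varphi_A=\mathscr S\circ\Phi=\sum_i\varphi_i$ (a finite sum for each $a$). *)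

theory Defs
  imports Complex_Main
begin

text \<open>Tensors are represented by finite formal sums (lists of pairs / triples).
Two formal sums represent the same element of the algebraic tensor product iff
all (multi)linear forms agree on them (the dual of a tensor product of vector
spaces separates points).  For the balanced tensor product over a subalgebra B
we use B-balanced bilinear forms.\<close>

definition lin :: "('k::field \<Rightarrow> 'v::ab_group_add \<Rightarrow> 'v) \<Rightarrow> ('k \<Rightarrow> 'w::ab_group_add \<Rightarrow> 'w) \<Rightarrow> ('v \<Rightarrow> 'w) \<Rightarrow> bool" where
  "lin sV sW f \<longleftrightarrow> (\<forall>x y. f (x + y) = f x + f y) \<and> (\<forall>c x. f (sV c x) = sW c (f x))"

definition bilin :: "('k::field \<Rightarrow> 'v::ab_group_add \<Rightarrow> 'v) \<Rightarrow> ('k \<Rightarrow> 'w::ab_group_add \<Rightarrow> 'w) \<Rightarrow> ('v \<Rightarrow> 'w \<Rightarrow> 'k) \<Rightarrow> bool" where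
  "bilin sV sW f \<longleftrightarrow> (\<forall>y. lin sV (*) (\<lambda>x. f x y)) \<and> (\<forall>x. lin sW (*) (f x))"

definition trilin :: "('k::field \<Rightarrow> 'u::ab_group_add \<Rightarrow> 'u) \<Rightarrow> ('k \<Rightarrow> 'v::ab_group_add \<Rightarrow> 'v) \<Rightarrow> ('k \<Rightarrow> 'w::ab_group_add \<Rightarrow> 'w) \<Rightarrow> ('u \<Rightarrow> 'v \<Rightarrow> 'w \<Rightarrow> 'k) \<Rightarrow> bool" where
  "trilin sU sV sW f \<longleftrightarrow> (\<forall>y z. lin sU (*) (\<lambda>x. f x y z)) \<and> (\<forall>x z. lin sV (*) (\<lambda>y. f x y z)) \<and> (\<forall>x y. lin sW (*) (f x y))"

definition teq2 :: "('k::field \<Rightarrow> 'v::ab_group_add \<Rightarrow> 'v) \<Rightarrow> ('k \<Rightarrow> 'w::ab_group_add \<Rightarrow> 'w) \<Rightarrow> ('v \<times> 'w) list \<Rightarrow> ('v \<times> 'w) list \<Rightarrow> bool" where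
  "teq2 sV sW xs ys \<longleftrightarrow> (\<forall>f. bilin sV sW f \<longrightarrow> (\<Sum>(x,y)\<leftarrow>xs. f x y) = (\<Sum>(x,y)\<leftarrow>ys. f x y))"

definition teq3 :: "('k::field \<Rightarrow> 'u::ab_group_add \<Rightarrow> 'u) \<Rightarrow> ('k \<Rightarrow> 'v::ab_group_add \<Rightarrow> 'v) \<Rightarrow> ('k \<Rightarrow> 'w::ab_group_add \<Rightarrow> 'w) \<Rightarrow> ('u \<times> 'v \<times> 'w) list \<Rightarrow> ('u \<times> 'v \<times> 'w) list \<Rightarrow> bool" where
  "teq3 sU sV sW xs ys \<longleftrightarrow> (\<forall>f. trilin sU sV sW f \<longrightarrow> (\<Sum>(x,y,z)\<leftarrow>xs. f x y z) = (\<Sum>(x,y,z)\<leftarrow>ys. f x y z))"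

definition teqB :: "('k::field \<Rightarrow> 'a::ring \<Rightarrow> 'a) \<Rightarrow> 'a set \<Rightarrow> ('a \<times> 'a) list \<Rightarrow> ('a \<times> 'a) list \<Rightarrow> bool" where
  "teqB sA B xs ys \<longleftrightarrow> (\<forall>f. bilin sA sA f \<and> (\<forall>b\<in>B. \<forall>x y. f (x * b) y = f x (b * y))
      \<longrightarrow> (\<Sum>(x,y)\<leftarrow>xs. f x y) = (\<Sum>(x,y)\<leftarrow>ys. f x y))"

definition tmult :: "('a::times \<times> 'b::times) list \<Rightarrow> ('a \<times> 'b) list \<Rightarrow> ('a \<times> 'b) list" where
  "tmult xs ys = [(x * x', y * y'). (x,y) \<leftarrow> xs, (x',y') \<leftarrow> ys]"

definition k_algebra :: "('k::field \<Rightarrow> 'a::ring \<Rightarrow> 'a) \<Rightarrow> bool" where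
  "k_algebra s \<longleftrightarrow> vector_space s \<and> (\<forall>c x y. s c (x * y) = s c x * y \<and> s c (x * y) = x * s c y)"

definition hopf_algebra :: "('k::field \<Rightarrow> 'h::ring_1 \<Rightarrow> 'h) \<Rightarrow> ('h \<Rightarrow> ('h \<times> 'h) list) \<Rightarrow> ('h \<Rightarrow> 'k) \<Rightarrow> ('h \<Rightarrow> 'h) \<Rightarrow> bool" where
  "hopf_algebra sH \<Delta> \<epsilon> S \<longleftrightarrow>
     k_algebra sH \<and>
     (\<forall>x y. teq2 sH sH (\<Delta> (x + y)) (\<Delta> x @ \<Delta> y)) \<and>
     (\<forall>c x. teq2 sH sH (\<Delta> (sH c x)) (map (\<lambda>(u,v). (sH c u, v)) (\<Delta> x))) \<and>
     (\<forall>x y. teq2 sH sH (\<Delta> (x * y)) (tmult (\<Delta> x) (\<Delta> y))) \<and>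
     teq2 sH sH (\<Delta> 1) [(1, 1)] \<and>
     (\<forall>x. teq3 sH sH sH [(u1, u2, v). (u,v) \<leftarrow> \<Delta> x, (u1,u2) \<leftarrow> \<Delta> u]
                          [(u, v1, v2). (u,v) \<leftarrow> \<Delta> x, (v1,v2) \<leftarrow> \<Delta> v]) \<and>
     lin sH (*) \<epsilon> \<and> (\<forall>x y. \<epsilon> (x * y) = \<epsilon> x * \<epsilon> y) \<and> \<epsilon> 1 = 1 \<and>
     (\<forall>x. (\<Sum>(u,v)\<leftarrow>\<Delta> x. sH (\<epsilon> u) v) = x) \<and>
     (\<forall>x. (\<Sum>(u,v)\<leftarrow>\<Delta> x. sH (\<epsilon> v) u) = x) \<and>
     lin sH sH S \<and>
     (\<forall>x. (\<Sum>(u,v)\<leftarrow>\<Delta> x. S u * v) = sH (\<epsilon> x) 1) \<and>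
     (\<forall>x. (\<Sum>(u,v)\<leftarrow>\<Delta> x. u * S v) = sH (\<epsilon> x) 1)"

definition left_invariant :: "('k::field \<Rightarrow> 'h::ring_1 \<Rightarrow> 'h) \<Rightarrow> ('h \<Rightarrow> ('h \<times> 'h) list) \<Rightarrow> ('h \<Rightarrow> 'k) \<Rightarrow> bool" where
  "left_invariant sH \<Delta> \<phi> \<longleftrightarrow> (\<forall>h. (\<Sum>(u,v)\<leftarrow>\<Delta> h. sH (\<phi> v) u) = sH (\<phi> h) 1)"

definition right_invariant :: "('k::field \<Rightarrow> 'h::ring_1 \<Rightarrow> 'h) \<Rightarrow> ('h \<Rightarrow> ('h \<times> 'h) list) \<Rightarrow> ('h \<Rightarrow> 'k) \<Rightarrow> bool" where
  "right_invariant sH \<Delta> \<psi> \<longleftrightarrow> (\<forall>h. (\<Sum>(u,v)\<leftarrow>\<Delta> h. sH (\<psi> u) v) = sH (\<psi> h) 1)"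

definition hopf_with_integrals :: "('k::field \<Rightarrow> 'h::ring_1 \<Rightarrow> 'h) \<Rightarrow> ('h \<Rightarrow> ('h \<times> 'h) list) \<Rightarrow> ('h \<Rightarrow> 'k) \<Rightarrow> ('h \<Rightarrow> 'h) \<Rightarrow> ('h \<Rightarrow> 'k) \<Rightarrow> bool" where
  "hopf_with_integrals sH \<Delta> \<epsilon> S \<phi> \<longleftrightarrow> hopf_algebra sH \<Delta> \<epsilon> S \<and>
     lin sH (*) \<phi> \<and> (\<exists>h. \<phi> h \<noteq> 0) \<and>
     left_invariant sH \<Delta> \<phi> \<and> right_invariant sH \<Delta> (\<phi> \<circ> S)"

definition modular_element :: "('k::field \<Rightarrow> 'h::ring_1 \<Rightarrow> 'h) \<Rightarrow> ('h \<Rightarrow> ('h \<times> 'h) list) \<Rightarrow> ('h \<Rightarrow> 'h) \<Rightarrow> ('h \<Rightarrow> 'k) \<Rightarrow> 'h \<Rightarrow> bool" where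
  "modular_element sH \<Delta> S \<phi> \<delta> \<longleftrightarrow> teq2 sH sH (\<Delta> \<delta>) [(\<delta>, \<delta>)] \<and>
     (\<exists>\<delta>'. \<delta> * \<delta>' = 1 \<and> \<delta>' * \<delta> = 1) \<and> (\<forall>h. \<phi> (S h) = \<phi> (h * \<delta>))"

definition comodule_algebra :: "('k::field \<Rightarrow> 'a::ring \<Rightarrow> 'a) \<Rightarrow> ('k \<Rightarrow> 'h::ring_1 \<Rightarrow> 'h) \<Rightarrow> ('h \<Rightarrow> ('h \<times> 'h) list) \<Rightarrow> ('h \<Rightarrow> 'k) \<Rightarrow> ('a \<Rightarrow> ('a \<times> 'h) list) \<Rightarrow> bool" where
  "comodule_algebra sA sH \<Delta> \<epsilon> \<alpha> \<longleftrightarrow> k_algebra sA \<and>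
     (\<forall>x y. teq2 sA sH (\<alpha> (x + y)) (\<alpha> x @ \<alpha> y)) \<and>
     (\<forall>c x. teq2 sA sH (\<alpha> (sA c x)) (map (\<lambda>(u,v). (sA c u, v)) (\<alpha> x))) \<and>
     (\<forall>x y. teq2 sA sH (\<alpha> (x * y)) (tmult (\<alpha> x) (\<alpha> y))) \<and>
     (\<forall>x. teq3 sA sH sH [(b, g, h). (a, h) \<leftarrow> \<alpha> x, (b, g) \<leftarrow> \<alpha> a]
                          [(a, h1, h2). (a, h) \<leftarrow> \<alpha> x, (h1, h2) \<leftarrow> \<Delta> h]) \<and>
     (\<forall>x. (\<Sum>(a,h)\<leftarrow>\<alpha> x. sA (\<epsilon> h) a) = x)"

definition coinv :: "('k::field \<Rightarrow> 'a::ring \<Rightarrow> 'a) \<Rightarrow> ('k \<Rightarrow> 'h::ring_1 \<Rightarrow> 'h) \<Rightarrow> ('a \<Rightarrow> ('a \<times> 'h) list) \<Rightarrow> 'a set" where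
  "coinv sA sH \<alpha> = {a. teq2 sA sH (\<alpha> a) [(a, 1)]}"

definition galois_map :: "('a \<Rightarrow> ('a \<times> 'h) list) \<Rightarrow> ('a::ring \<times> 'a) list \<Rightarrow> ('a \<times> 'h) list" where
  "galois_map \<alpha> xs = [(a * c, h). (a, b) \<leftarrow> xs, (c, h) \<leftarrow> \<alpha> b]"

text \<open>I-Galois object: coinvariants are \<open>k_I\<close> with minimal idempotents \<open>p i\<close> (\<open>i \<in> I\<close>),
  and the Galois map \<open>A \<otimes>_{A^\<alpha>} A \<rightarrow> A \<otimes> H\<close> is bijective.\<close>
definition I_galois_object :: "('k::field \<Rightarrow> 'a::ring \<Rightarrow> 'a) \<Rightarrow> ('k \<Rightarrow> 'h::ring_1 \<Rightarrow> 'h) \<Rightarrow> ('h \<Rightarrow> ('h \<times> 'h) list) \<Rightarrow> ('h \<Rightarrow> 'k) \<Rightarrow> ('a \<Rightarrow> ('a \<times> 'h) list) \<Rightarrow> 'i set \<Rightarrow> ('i \<Rightarrow> 'a) \<Rightarrow> bool" where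
  "I_galois_object sA sH \<Delta> \<epsilon> \<alpha> I p \<longleftrightarrow> comodule_algebra sA sH \<Delta> \<epsilon> \<alpha> \<and>
     (\<forall>i\<in>I. p i \<noteq> 0 \<and> p i \<in> coinv sA sH \<alpha>) \<and>
     (\<forall>i\<in>I. \<forall>j\<in>I. p i * p j = (if i = j then p i else 0)) \<and>
     (\<forall>b\<in>coinv sA sH \<alpha>. \<exists>F c. finite F \<and> F \<subseteq> I \<and> b = (\<Sum>i\<in>F. sA (c i) (p i))) \<and>
     (\<forall>xs ys. teq2 sA sH (galois_map \<alpha> xs) (galois_map \<alpha> ys) \<longrightarrow> teqB sA (coinv sA sH \<alpha>) xs ys) \<and>
     (\<forall>zs. \<exists>xs. teq2 sA sH (galois_map \<alpha> xs) zs)"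

definition Phi_map :: "('k::field \<Rightarrow> 'a::ring \<Rightarrow> 'a) \<Rightarrow> ('a \<Rightarrow> ('a \<times> 'h) list) \<Rightarrow> ('h \<Rightarrow> 'k) \<Rightarrow> 'a \<Rightarrow> 'a" where
  "Phi_map sA \<alpha> \<phi> a = (\<Sum>(x,h)\<leftarrow>\<alpha> a. sA (\<phi> h) x)"

definition scrS :: "('k::field \<Rightarrow> 'a::ring \<Rightarrow> 'a) \<Rightarrow> 'i set \<Rightarrow> ('i \<Rightarrow> 'a) \<Rightarrow> 'a \<Rightarrow> 'k" where
  "scrS sA I p b = (THE s. \<exists>F c. finite F \<and> F \<subseteq> I \<and> b = (\<Sum>i\<in>F. sA (c i) (p i)) \<and> s = sum c F)"

definition phi_A :: "('k::field \<Rightarrow> 'a::ring \<Rightarrow> 'a) \<Rightarrow> ('a \<Rightarrow> ('a \<times> 'h) list) \<Rightarrow> ('h \<Rightarrow> 'k) \<Rightarrow> 'i set \<Rightarrow> ('i \<Rightarrow> 'a) \<Rightarrow> 'a \<Rightarrow> 'k" where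
  "phi_A sA \<alpha> \<phi> I p a = scrS sA I p (Phi_map sA \<alpha> \<phi> a)"

end

theory Submission
  imports Defs
begin


section \<open>Generic linear algebra on formal sums\<close>

lemma sum_list_concat_pairs:
  "(\<Sum>(u,v)\<leftarrow>concat (map g xs). f u v) = (\<Sum>x\<leftarrow>xs. \<Sum>(u,v)\<leftarrow>g x. f u v)"
  by (induction xs) auto

lemma sum_list_concat_triples:
  "(\<Sum>(u,v,w)\<leftarrow>concat (map g xs). f u v w) = (\<Sum>x\<leftarrow>xs. \<Sum>(u,v,w)\<leftarrow>g x. f u v w)"
  by (induction xs) auto

lemma sum_list_map_pairs:
  "(\<Sum>(u,v)\<leftarrow>map g xs. f u v) = (\<Sum>x\<leftarrow>xs. (case g x of (u,v) \<Rightarrow> f u v))"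
  by (induction xs) auto

lemma sum_galois:
  "(\<Sum>(u,v)\<leftarrow>galois_map \<alpha> xs. f u v) = (\<Sum>(a,b)\<leftarrow>xs. \<Sum>(c,h)\<leftarrow>\<alpha> b. f (a*c) h)"
  unfolding galois_map_def
  by (induction xs) (auto simp: sum_list_concat_pairs sum_list_map_pairs case_prod_beta o_def)

lemma sum_tmult:
  "(\<Sum>(u,v)\<leftarrow>tmult xs ys. f u v) = (\<Sum>(a,b)\<leftarrow>xs. \<Sum>(c,h)\<leftarrow>ys. f (a*c) (b*h))"
  unfolding tmult_def
  by (induction xs) (auto simp: sum_list_concat_pairs sum_list_map_pairs case_prod_beta o_def)

lemma sum_coass1:
  "(\<Sum>(u,v,w)\<leftarrow>[(b, g, h). (a, h) \<leftarrow> xs, (b, g) \<leftarrow> \<beta> a]. f u v w)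
   = (\<Sum>(a,h)\<leftarrow>xs. \<Sum>(b,g)\<leftarrow>\<beta> a. f b g h)"
  by (induction xs) (auto simp: sum_list_concat_triples sum_list_map_pairs case_prod_beta o_def)

lemma sum_coass2:
  "(\<Sum>(u,v,w)\<leftarrow>[(a, h1, h2). (a, h) \<leftarrow> xs, (h1, h2) \<leftarrow> \<beta> h]. f u v w)
   = (\<Sum>(a,h)\<leftarrow>xs. \<Sum>(h1,h2)\<leftarrow>\<beta> h. f a h1 h2)"
  by (induction xs) (auto simp: sum_list_concat_triples sum_list_map_pairs case_prod_beta o_def)

lemma sum_map_scale:
  "(\<Sum>(u,v)\<leftarrow>map (\<lambda>(u,v). (s c u, v)) xs. f u v) = (\<Sum>(u,v)\<leftarrow>xs. f (s c u) v)"
  by (induction xs) auto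

lemma lin_add: "lin sV sW f \<Longrightarrow> f (x + y) = f x + f y"
  unfolding lin_def by blast
lemma lin_scale: "lin sV sW f \<Longrightarrow> f (sV c x) = sW c (f x)"
  unfolding lin_def by blast
lemma lin_zero: "lin sV sW f \<Longrightarrow> f 0 = 0"
  using lin_add[of sV sW f 0 0] by simp
lemma lin_sum_list: "lin sV sW f \<Longrightarrow> f (sum_list (map g xs)) = sum_list (map (\<lambda>x. f (g x)) xs)"
  by (induction xs) (auto simp: lin_zero lin_add)
lemma lin_sum_list2: "lin sV sW f \<Longrightarrow> f (\<Sum>(u,v)\<leftarrow>xs. g u v) = (\<Sum>(u,v)\<leftarrow>xs. f (g u v))"
  by (induction xs) (auto simp: lin_zero lin_add)
lemma lin_sum: "lin sV sW f \<Longrightarrow> f (sum g A) = sum (\<lambda>x. f (g x)) A"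
  by (induction A rule: infinite_finite_induct) (auto simp: lin_zero lin_add)
lemma lin_comp: "lin s1 s2 f \<Longrightarrow> lin s2 s3 g \<Longrightarrow> lin s1 s3 (\<lambda>x. g (f x))"
  unfolding lin_def by auto
lemma lin_neg: "lin sV sW f \<Longrightarrow> f (- x) = - f x"
  by (metis add_eq_0_iff lin_add lin_zero)
lemma lin_diff: "lin sV sW f \<Longrightarrow> f (x - y) = f x - f y"
  by (metis diff_conv_add_uminus lin_add lin_neg)

lemma vs_field: "vector_space ((*) :: 'k::field \<Rightarrow> 'k \<Rightarrow> 'k)"
  by unfold_locales (auto simp: algebra_simps)

lemma lin_iff_linear:
  assumes "vector_space s1" "vector_space s2"
  shows "lin s1 s2 f \<longleftrightarrow> Vector_Spaces.linear s1 s2 f"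
  using assms unfolding lin_def by (auto simp: Vector_Spaces.linear_iff)

lemma lin_sep:
  fixes s :: "'k::field \<Rightarrow> 'v::ab_group_add \<Rightarrow> 'v"
  assumes vs: "vector_space s" and h: "\<And>l. lin s (*) l \<Longrightarrow> l x = l y"
  shows "x = y"
proof (rule ccontr)
  assume ne: "x \<noteq> y"
  interpret V: vector_space s by (rule vs)
  interpret vsp: vector_space_pair s "(*) :: 'k \<Rightarrow> 'k \<Rightarrow> 'k"
    using vs vs_field by (simp add: vector_space_pair_def)
  have "V.independent {x - y}"
    using ne by simp
  then obtain g where g: "Vector_Spaces.linear s (*) g" "g (x - y) = 1"
    using vsp.linear_independent_extend[of "{x - y}" "\<lambda>_. 1"] by auto
  have lg: "lin s (*) g" using g(1) lin_iff_linear[OF vs vs_field] by simp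
  have "g x - g y = 1" using g(2) lin_diff[OF lg] by simp
  with h[OF lg] show False by simp
qed

definition bil where
  "bil sV sW sU F \<longleftrightarrow> (\<forall>v. lin sV sU (\<lambda>u. F u v)) \<and> (\<forall>u. lin sW sU (F u))"

definition tril where
  "tril sU sV sW sX F \<longleftrightarrow> (\<forall>v w. lin sU sX (\<lambda>u. F u v w)) \<and> (\<forall>u w. lin sV sX (\<lambda>v. F u v w))
     \<and> (\<forall>u v. lin sW sX (F u v))"

lemma bilI:
  assumes "\<And>x y v. F (x + y) v = F x v + F y v" "\<And>c x v. F (sV c x) v = sU c (F x v)"
    "\<And>u x y. F u (x + y) = F u x + F u y" "\<And>c u x. F u (sW c x) = sU c (F u x)"
  shows "bil sV sW sU F"
  using assms unfolding bil_def lin_def by auto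

lemma trilI:
  assumes "\<And>x y v w. F (x + y) v w = F x v w + F y v w" "\<And>c x v w. F (sU c x) v w = sX c (F x v w)"
    "\<And>u x y w. F u (x + y) w = F u x w + F u y w" "\<And>c u x w. F u (sV c x) w = sX c (F u x w)"
    "\<And>u v x y. F u v (x + y) = F u v x + F u v y" "\<And>c u v x. F u v (sW c x) = sX c (F u v x)"
  shows "tril sU sV sW sX F"
  using assms unfolding tril_def lin_def by auto

lemma teq2_bil:
  fixes sU :: "'k::field \<Rightarrow> 'u::ab_group_add \<Rightarrow> 'u"
  assumes "teq2 sV sW xs ys" "vector_space sU" "bil sV sW sU F"
  shows "(\<Sum>(u,v)\<leftarrow>xs. F u v) = (\<Sum>(u,v)\<leftarrow>ys. F u v)"
proof (rule lin_sep[OF assms(2)])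
  fix l :: "'u \<Rightarrow> 'k" assume l: "lin sU (*) l"
  have "bilin sV sW (\<lambda>u v. l (F u v))"
    unfolding bilin_def
  proof (intro conjI allI)
    fix v have "lin sV sU (\<lambda>u. F u v)" using assms(3) unfolding bil_def by blast
    from lin_comp[OF this l] show "lin sV (*) (\<lambda>u. l (F u v))" .
  next
    fix u have "lin sW sU (F u)" using assms(3) unfolding bil_def by blast
    from lin_comp[OF this l] show "lin sW (*) (\<lambda>v. l (F u v))" .
  qed
  then have "(\<Sum>(u,v)\<leftarrow>xs. l (F u v)) = (\<Sum>(u,v)\<leftarrow>ys. l (F u v))"
    using assms(1) unfolding teq2_def by blast
  then show "l (\<Sum>(u,v)\<leftarrow>xs. F u v) = l (\<Sum>(u,v)\<leftarrow>ys. F u v)"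
    by (simp add: lin_sum_list2[OF l])
qed

lemma teq3_tril:
  fixes sX :: "'k::field \<Rightarrow> 'x::ab_group_add \<Rightarrow> 'x"
  assumes "teq3 sU sV sW xs ys" "vector_space sX" "tril sU sV sW sX F"
  shows "(\<Sum>(u,v,w)\<leftarrow>xs. F u v w) = (\<Sum>(u,v,w)\<leftarrow>ys. F u v w)"
proof (rule lin_sep[OF assms(2)])
  fix l :: "'x \<Rightarrow> 'k" assume l: "lin sX (*) l"
  have "trilin sU sV sW (\<lambda>u v w. l (F u v w))"
    unfolding trilin_def
  proof (intro conjI allI)
    fix v w have "lin sU sX (\<lambda>u. F u v w)" using assms(3) unfolding tril_def by blast
    from lin_comp[OF this l] show "lin sU (*) (\<lambda>u. l (F u v w))" .
  next
    fix u w have "lin sV sX (\<lambda>v. F u v w)" using assms(3) unfolding tril_def by blast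
    from lin_comp[OF this l] show "lin sV (*) (\<lambda>v. l (F u v w))" .
  next
    fix u v have "lin sW sX (F u v)" using assms(3) unfolding tril_def by blast
    from lin_comp[OF this l] show "lin sW (*) (\<lambda>w. l (F u v w))" .
  qed
  then have "(\<Sum>(u,v,w)\<leftarrow>xs. l (F u v w)) = (\<Sum>(u,v,w)\<leftarrow>ys. l (F u v w))"
    using assms(1) unfolding teq3_def by blast
  moreover have "l (\<Sum>(u,v,w)\<leftarrow>zs. F u v w) = (\<Sum>(u,v,w)\<leftarrow>zs. l (F u v w))" for zs
    by (induction zs) (auto simp: lin_zero[OF l] lin_add[OF l])
  ultimately show "l (\<Sum>(u,v,w)\<leftarrow>xs. F u v w) = l (\<Sum>(u,v,w)\<leftarrow>ys. F u v w)"
    by simp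
qed

lemma bilin_bil: "bilin sV sW f = bil sV sW (*) f"
  unfolding bilin_def bil_def ..

lemma teq2_scalar:
  assumes "teq2 sV sW xs ys" "bilin sV sW f"
  shows "(\<Sum>(u,v)\<leftarrow>xs. f u v) = (\<Sum>(u,v)\<leftarrow>ys. f u v)"
  using assms unfolding teq2_def by blast

section \<open>Decomposition of a finite family of vectors\<close>

lemma decomp:
  fixes s :: "'k::field \<Rightarrow> 'v::ab_group_add \<Rightarrow> 'v"
  assumes vs: "vector_space s" and fin: "finite X"
  shows "\<exists>E lam. finite E \<and> (\<forall>e. lin s (*) (lam e)) \<and> (\<forall>u\<in>X. u = (\<Sum>e\<in>E. s (lam e u) e))"
proof -
  interpret V: vector_space s by (rule vs)
  interpret vsp: vector_space_pair s "(*) :: 'k \<Rightarrow> 'k \<Rightarrow> 'k"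
    using vs vs_field by (simp add: vector_space_pair_def)
  obtain B where B: "B \<subseteq> X" "V.independent B" "X \<subseteq> V.span B"
    using V.maximal_independent_subset by blast
  have finB: "finite B" using B(1) fin finite_subset by blast
  have "\<forall>e. \<exists>g. Vector_Spaces.linear s (*) g \<and> (\<forall>b\<in>B. g b = (if b = e then 1 else 0))"
  proof
    fix e show "\<exists>g. Vector_Spaces.linear s (*) g \<and> (\<forall>b\<in>B. g b = (if b = e then 1 else 0))"
      using vsp.linear_independent_extend[OF B(2), of "\<lambda>b. if b = e then 1 else 0"] by simp
  qed
  then obtain lam where lam0: "\<forall>e. Vector_Spaces.linear s (*) (lam e) \<and> (\<forall>b\<in>B. lam e b = (if b = e then 1 else 0))"
    using choice[OF \<open>\<forall>e. _\<close>] by blast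
  then have lam: "\<And>e. Vector_Spaces.linear s (*) (lam e)" "\<And>e b. b \<in> B \<Longrightarrow> lam e b = (if b = e then 1 else 0)"
    by auto
  have llam: "lin s (*) (lam e)" for e using lam(1) lin_iff_linear[OF vs vs_field] by simp
  have "u = (\<Sum>e\<in>B. s (lam e u) e)" if "u \<in> X" for u
  proof -
    have "u \<in> V.span B" using that B(3) by blast
    then obtain c where c: "(\<Sum>v\<in>B. s (c v) v) = u"
      using V.span_finite[OF finB] by auto
    have "lam e u = c e" if "e \<in> B" for e
    proof -
      have "lam e u = (\<Sum>v\<in>B. c v * lam e v)"
        unfolding c[symmetric] by (simp add: lin_sum[OF llam] lin_scale[OF llam])
      also have "\<dots> = (\<Sum>v\<in>B. if v = e then c v else 0)"
        by (rule sum.cong) (auto simp: lam(2))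
      also have "\<dots> = c e" using that finB by simp
      finally show ?thesis .
    qed
    then have "(\<Sum>e\<in>B. s (lam e u) e) = (\<Sum>e\<in>B. s (c e) e)" by (intro sum.cong) auto
    then show ?thesis using c by simp
  qed
  then show ?thesis using finB llam by blast
qed

lemma sum_list_sum_swap:
  "(\<Sum>(u,v)\<leftarrow>L. \<Sum>e\<in>E. g e u v) = (\<Sum>e\<in>E. \<Sum>(u,v)\<leftarrow>L. g e u v)"
proof (induction L)
  case (Cons a L)
  then show ?case by (cases a) (simp add: sum.distrib)
qed simp

lemma self_add: "(x::'a::ab_group_add) = x + x \<Longrightarrow> x = 0"
proof -
  assume "x = x + x"
  then have "x + x = x + 0" by simp
  then show "x = 0" by (simp only: add_left_cancel)
qed

lemma additive_sum_fst:
  fixes F :: "'a::comm_monoid_add \<Rightarrow> 'b \<Rightarrow> 'u::ab_group_add"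
  assumes "\<And>x y v. F (x + y) v = F x v + F y v"
  shows "F (\<Sum>e\<in>E. g e) v = (\<Sum>e\<in>E. F (g e) v)"
proof -
  have z: "F 0 v = 0" using assms[of 0 0 v] by (intro self_add) simp
  show ?thesis
  proof (induction E rule: infinite_finite_induct)
    case (insert x F)
    then show ?case by (simp add: assms)
  qed (simp_all add: z)
qed

lemma additive_sum_list_snd:
  fixes F :: "'a \<Rightarrow> 'b::comm_monoid_add \<Rightarrow> 'u::ab_group_add"
  assumes "\<And>u x y. F u (x + y) = F u x + F u y"
  shows "F u (\<Sum>(a,b)\<leftarrow>L. g a b) = (\<Sum>(a,b)\<leftarrow>L. F u (g a b))"
proof -
  have z: "F u 0 = 0" using assms[of u 0 0] by (intro self_add) simp
  show ?thesis
  proof (induction L)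
    case (Cons a L)
    then show ?case by (cases a) (simp add: assms)
  qed (simp add: z)
qed

lemma decomp_sum:
  fixes F :: "'a::ab_group_add \<Rightarrow> 'b::ab_group_add \<Rightarrow> 'u::ab_group_add"
  assumes fin: "finite E"
    and rep: "\<And>u v. (u,v) \<in> set L \<Longrightarrow> u = (\<Sum>e\<in>E. sV (lam e u) e)"
    and a1: "\<And>x y v. F (x + y) v = F x v + F y v"
    and a2: "\<And>u x y. F u (x + y) = F u x + F u y"
    and bal: "\<And>c u v. F (sV c u) v = F u (sW c v)"
  shows "(\<Sum>(u,v)\<leftarrow>L. F u v) = (\<Sum>e\<in>E. F e (\<Sum>(u,v)\<leftarrow>L. sW (lam e u) v))"
proof -
  have "(\<Sum>(u,v)\<leftarrow>L. F u v) = (\<Sum>(u,v)\<leftarrow>L. \<Sum>e\<in>E. F e (sW (lam e u) v))"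
  proof (rule arg_cong[where f=sum_list], rule map_cong[OF refl], clarify)
    fix u v assume "(u,v) \<in> set L"
    then have "F u v = F (\<Sum>e\<in>E. sV (lam e u) e) v" using rep by metis
    also have "\<dots> = (\<Sum>e\<in>E. F e (sW (lam e u) v))"
      by (rule trans[OF additive_sum_fst[where F=F, OF a1]]) (simp add: bal)
    finally show "F u v = (\<Sum>e\<in>E. F e (sW (lam e u) v))" .
  qed
  also have "\<dots> = (\<Sum>e\<in>E. \<Sum>(u,v)\<leftarrow>L. F e (sW (lam e u) v))"
    by (rule sum_list_sum_swap)
  also have "\<dots> = (\<Sum>e\<in>E. F e (\<Sum>(u,v)\<leftarrow>L. sW (lam e u) v))"
    by (intro sum.cong[OF refl]) (rule additive_sum_list_snd[where F=F, OF a2, symmetric])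
  finally show ?thesis .
qed

lemma decomp_sum2:
  fixes F :: "'a::ab_group_add \<Rightarrow> 'b::ab_group_add \<Rightarrow> 'u::ab_group_add"
  assumes fin: "finite E"
    and rep: "\<And>u v. (u,v) \<in> set L \<Longrightarrow> v = (\<Sum>e\<in>E. sW (lam e v) e)"
    and a1: "\<And>x y v. F (x + y) v = F x v + F y v"
    and a2: "\<And>u x y. F u (x + y) = F u x + F u y"
    and bal: "\<And>c u v. F (sV c u) v = F u (sW c v)"
  shows "(\<Sum>(u,v)\<leftarrow>L. F u v) = (\<Sum>e\<in>E. F (\<Sum>(u,v)\<leftarrow>L. sV (lam e v) u) e)"
proof -
  have "(\<Sum>(u,v)\<leftarrow>L. F u v) = (\<Sum>(u,v)\<leftarrow>L. \<Sum>e\<in>E. F (sV (lam e v) u) e)"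
  proof (rule arg_cong[where f=sum_list], rule map_cong[OF refl], clarify)
    fix u v assume "(u,v) \<in> set L"
    then have "F u v = F u (\<Sum>e\<in>E. sW (lam e v) e)" using rep by metis
    also have "\<dots> = (\<Sum>e\<in>E. F (sV (lam e v) u) e)"
    proof -
      have z: "F u 0 = 0" using a2[of u 0 0] by (intro self_add) simp
      have "F u (\<Sum>e\<in>E. g e) = (\<Sum>e\<in>E. F u (g e))" for g :: "_ \<Rightarrow> _"
      proof (induction E rule: infinite_finite_induct)
        case (insert x F)
        then show ?case by (simp add: a2)
      qed (simp_all add: z)
      then show ?thesis by (simp add: bal)
    qed
    finally show "F u v = (\<Sum>e\<in>E. F (sV (lam e v) u) e)" .
  qed
  also have "\<dots> = (\<Sum>e\<in>E. \<Sum>(u,v)\<leftarrow>L. F (sV (lam e v) u) e)"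
    by (rule sum_list_sum_swap)
  also have "\<dots> = (\<Sum>e\<in>E. F (\<Sum>(u,v)\<leftarrow>L. sV (lam e v) u) e)"
  proof -
    have z: "F 0 w = 0" for w using a1[of 0 0 w] by (intro self_add) simp
    have "F (\<Sum>(a,b)\<leftarrow>L'. g a b) w = (\<Sum>(a,b)\<leftarrow>L'. F (g a b) w)" for L' g w
    proof (induction L')
      case (Cons a L)
      then show ?case by (cases a) (simp add: a1)
    qed (simp add: z)
    then show ?thesis by (intro sum.cong[OF refl]) (rule sym)
  qed
  finally show ?thesis .
qed




lemma sum_list_swap:
  fixes f :: "'a \<Rightarrow> 'b \<Rightarrow> 'c \<Rightarrow> 'd \<Rightarrow> 'e::comm_monoid_add"
  shows "(\<Sum>(u,v)\<leftarrow>L. \<Sum>(x,y)\<leftarrow>M. f u v x y) = (\<Sum>(x,y)\<leftarrow>M. \<Sum>(u,v)\<leftarrow>L. f u v x y)"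
proof (induction L)
  case (Cons a L)
  then show ?case by (cases a) (simp add: sum_list_addf case_prod_beta)
qed (simp add: sum_list_0 case_prod_beta)

lemma sum_list_add2:
  "(\<Sum>(u,v)\<leftarrow>L. f u v + g u v) = (\<Sum>(u,v)\<leftarrow>L. f u v) + (\<Sum>(u,v)\<leftarrow>L. (g u v :: 'a::comm_monoid_add))"
  by (induction L) (auto simp: algebra_simps)

lemma sum_list_zero2[simp]: "(\<Sum>(u,v)\<leftarrow>L. (0::'a::monoid_add)) = 0"
  by (induction L) auto

lemma sum_list_cong2:
  "(\<And>u v. (u,v) \<in> set L \<Longrightarrow> f u v = g u v) \<Longrightarrow> (\<Sum>(u,v)\<leftarrow>L. f u v) = (\<Sum>(u,v)\<leftarrow>L. g u v)"
  by (rule arg_cong[where f=sum_list], rule map_cong[OF refl]) auto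

lemma sum_list_right_mult:
  "(\<Sum>(u,v)\<leftarrow>L. f u v) * (y::'a::ring) = (\<Sum>(u,v)\<leftarrow>L. f u v * y)"
  by (induction L) (auto simp: distrib_right)
lemma sum_list_left_mult:
  "(y::'a::ring) * (\<Sum>(u,v)\<leftarrow>L. f u v) = (\<Sum>(u,v)\<leftarrow>L. y * f u v)"
  by (induction L) (auto simp: distrib_left)

locale hopf_ctx =
  fixes sH :: "'k::field \<Rightarrow> 'h::ring_1 \<Rightarrow> 'h" and \<Delta> :: "'h \<Rightarrow> ('h \<times> 'h) list"
    and \<epsilon> :: "'h \<Rightarrow> 'k" and S :: "'h \<Rightarrow> 'h" and \<phi> :: "'h \<Rightarrow> 'k" and \<delta> :: 'h
  assumes hwi: "hopf_with_integrals sH \<Delta> \<epsilon> S \<phi>" and me: "modular_element sH \<Delta> S \<phi> \<delta>"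
begin

lemma ha: "hopf_algebra sH \<Delta> \<epsilon> S" using hwi unfolding hopf_with_integrals_def by blast
lemma kaH: "k_algebra sH" using ha unfolding hopf_algebra_def by blast
lemma vsH: "vector_space sH" using kaH unfolding k_algebra_def by blast

sublocale H: vector_space sH by (rule vsH)

lemma sH_multL[simp]: "sH c x * y = sH c (x * y)" using kaH unfolding k_algebra_def by metis
lemma sH_multR[simp]: "x * sH c y = sH c (x * y)" using kaH unfolding k_algebra_def by metis

lemma D_add: "teq2 sH sH (\<Delta> (x + y)) (\<Delta> x @ \<Delta> y)" using ha unfolding hopf_algebra_def by blast
lemma D_scale: "teq2 sH sH (\<Delta> (sH c x)) (map (\<lambda>(u,v). (sH c u, v)) (\<Delta> x))" using ha unfolding hopf_algebra_def by blast
lemma D_mult: "teq2 sH sH (\<Delta> (x * y)) (tmult (\<Delta> x) (\<Delta> y))" using ha unfolding hopf_algebra_def by blast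
lemma D_one: "teq2 sH sH (\<Delta> 1) [(1, 1)]" using ha unfolding hopf_algebra_def by blast
lemma coass: "teq3 sH sH sH [(u1, u2, v). (u,v) \<leftarrow> \<Delta> x, (u1,u2) \<leftarrow> \<Delta> u]
                          [(u, v1, v2). (u,v) \<leftarrow> \<Delta> x, (v1,v2) \<leftarrow> \<Delta> v]" using ha unfolding hopf_algebra_def by blast
lemma eps_lin: "lin sH (*) \<epsilon>" using ha unfolding hopf_algebra_def by blast
lemma eps_mult: "\<epsilon> (x * y) = \<epsilon> x * \<epsilon> y" using ha unfolding hopf_algebra_def by blast
lemma eps_one[simp]: "\<epsilon> 1 = 1" using ha unfolding hopf_algebra_def by blast
lemma counitL: "(\<Sum>(u,v)\<leftarrow>\<Delta> x. sH (\<epsilon> u) v) = x" using ha unfolding hopf_algebra_def by blast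
lemma counitR: "(\<Sum>(u,v)\<leftarrow>\<Delta> x. sH (\<epsilon> v) u) = x" using ha unfolding hopf_algebra_def by blast
lemma S_lin: "lin sH sH S" using ha unfolding hopf_algebra_def by blast
lemma antipL: "(\<Sum>(u,v)\<leftarrow>\<Delta> x. S u * v) = sH (\<epsilon> x) 1" using ha unfolding hopf_algebra_def by blast
lemma antipR: "(\<Sum>(u,v)\<leftarrow>\<Delta> x. u * S v) = sH (\<epsilon> x) 1" using ha unfolding hopf_algebra_def by blast
lemma phi_lin: "lin sH (*) \<phi>" using hwi unfolding hopf_with_integrals_def by blast
lemma phi_nz: "\<exists>h. \<phi> h \<noteq> 0" using hwi unfolding hopf_with_integrals_def by blast
lemma linv: "(\<Sum>(u,v)\<leftarrow>\<Delta> h. sH (\<phi> v) u) = sH (\<phi> h) 1"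
  using hwi unfolding hopf_with_integrals_def left_invariant_def by blast
lemma rinv: "(\<Sum>(u,v)\<leftarrow>\<Delta> h. sH (\<phi> (S u)) v) = sH (\<phi> (S h)) 1"
  using hwi unfolding hopf_with_integrals_def right_invariant_def by simp
lemma D_delta: "teq2 sH sH (\<Delta> \<delta>) [(\<delta>, \<delta>)]" using me unfolding modular_element_def by blast
lemma delta_inv: "\<exists>\<delta>'. \<delta> * \<delta>' = 1 \<and> \<delta>' * \<delta> = 1" using me unfolding modular_element_def by blast
lemma phi_S: "\<phi> (S h) = \<phi> (h * \<delta>)" using me unfolding modular_element_def by blast

lemma phi_add[simp]: "\<phi> (x + y) = \<phi> x + \<phi> y" using lin_add[OF phi_lin] .
lemma phi_scale[simp]: "\<phi> (sH c x) = c * \<phi> x" using lin_scale[OF phi_lin] .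
lemma phi_zero[simp]: "\<phi> 0 = 0" using lin_zero[OF phi_lin] .
lemma eps_add[simp]: "\<epsilon> (x + y) = \<epsilon> x + \<epsilon> y" using lin_add[OF eps_lin] .
lemma eps_scale[simp]: "\<epsilon> (sH c x) = c * \<epsilon> x" using lin_scale[OF eps_lin] .
lemma eps_zero[simp]: "\<epsilon> 0 = 0" using lin_zero[OF eps_lin] .
lemma S_add[simp]: "S (x + y) = S x + S y" using lin_add[OF S_lin] .
lemma S_scale[simp]: "S (sH c x) = sH c (S x)" using lin_scale[OF S_lin] .
lemma S_zero[simp]: "S 0 = 0" using lin_zero[OF S_lin] .

lemma phi_sum: "\<phi> (\<Sum>(u,v)\<leftarrow>L. f u v) = (\<Sum>(u,v)\<leftarrow>L. \<phi> (f u v))" using lin_sum_list2[OF phi_lin] .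
lemma eps_sum: "\<epsilon> (\<Sum>(u,v)\<leftarrow>L. f u v) = (\<Sum>(u,v)\<leftarrow>L. \<epsilon> (f u v))" using lin_sum_list2[OF eps_lin] .
lemma S_sum: "S (\<Sum>(u,v)\<leftarrow>L. f u v) = (\<Sum>(u,v)\<leftarrow>L. S (f u v))" using lin_sum_list2[OF S_lin] .
lemma lin_sH: "lin sH sH (sH c)" unfolding lin_def by (simp add: H.scale_right_distrib mult.commute)
lemma sH_sum: "sH c (\<Sum>(u,v)\<leftarrow>L. f u v) = (\<Sum>(u,v)\<leftarrow>L. sH c (f u v))" using lin_sum_list2[OF lin_sH] .
lemma sH_sum_left: "sH (\<Sum>(u,v)\<leftarrow>L. f u v) x = (\<Sum>(u,v)\<leftarrow>L. sH (f u v) x)"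
  by (induction L) (auto simp: H.scale_left_distrib)

lemmas hsimps = H.scale_right_distrib H.scale_left_distrib distrib_left distrib_right
  algebra_simps

lemma Dsum_add:
  fixes sU :: "'k \<Rightarrow> 'u::ab_group_add \<Rightarrow> 'u"
  assumes "vector_space sU" "bil sH sH sU F"
  shows "(\<Sum>(u,v)\<leftarrow>\<Delta> (x + y). F u v) = (\<Sum>(u,v)\<leftarrow>\<Delta> x. F u v) + (\<Sum>(u,v)\<leftarrow>\<Delta> y. F u v)"
  using teq2_bil[OF D_add assms] by simp

lemma Dsum_scale:
  fixes sU :: "'k \<Rightarrow> 'u::ab_group_add \<Rightarrow> 'u"
  assumes "vector_space sU" "bil sH sH sU F"
  shows "(\<Sum>(u,v)\<leftarrow>\<Delta> (sH c x). F u v) = sU c (\<Sum>(u,v)\<leftarrow>\<Delta> x. F u v)"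
proof -
  interpret U: vector_space sU by fact
  have l: "lin sU sU (sU c)" unfolding lin_def
    by (simp add: U.scale_right_distrib mult.commute)
  have "(\<Sum>(u,v)\<leftarrow>\<Delta> (sH c x). F u v) = (\<Sum>(u,v)\<leftarrow>\<Delta> x. F (sH c u) v)"
    using teq2_bil[OF D_scale assms] unfolding sum_map_scale .
  also have "\<dots> = (\<Sum>(u,v)\<leftarrow>\<Delta> x. sU c (F u v))"
    using assms(2) unfolding bil_def lin_def by simp
  also have "\<dots> = sU c (\<Sum>(u,v)\<leftarrow>\<Delta> x. F u v)" by (rule sym[OF lin_sum_list2[OF l]])
  finally show ?thesis .
qed

lemma Dsum_mult:
  fixes sU :: "'k \<Rightarrow> 'u::ab_group_add \<Rightarrow> 'u"
  assumes "vector_space sU" "bil sH sH sU F"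
  shows "(\<Sum>(u,v)\<leftarrow>\<Delta> (x * y). F u v) = (\<Sum>(a,b)\<leftarrow>\<Delta> x. \<Sum>(c,d)\<leftarrow>\<Delta> y. F (a*c) (b*d))"
  using teq2_bil[OF D_mult assms] by (simp add: sum_tmult)

lemma Dsum_one:
  fixes sU :: "'k \<Rightarrow> 'u::ab_group_add \<Rightarrow> 'u"
  assumes "vector_space sU" "bil sH sH sU F"
  shows "(\<Sum>(u,v)\<leftarrow>\<Delta> 1. F u v) = F 1 1"
  using teq2_bil[OF D_one assms] by simp

lemma Dsum_zero:
  fixes sU :: "'k \<Rightarrow> 'u::ab_group_add \<Rightarrow> 'u"
  assumes "vector_space sU" "bil sH sH sU F"
  shows "(\<Sum>(u,v)\<leftarrow>\<Delta> 0. F u v) = 0"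
  using Dsum_add[OF assms, of 0 0] by (intro self_add) simp

lemma coass_sum:
  fixes sX :: "'k \<Rightarrow> 'x::ab_group_add \<Rightarrow> 'x"
  assumes "vector_space sX" "tril sH sH sH sX F"
  shows "(\<Sum>(u,v)\<leftarrow>\<Delta> x. \<Sum>(u1,u2)\<leftarrow>\<Delta> u. F u1 u2 v) = (\<Sum>(u,v)\<leftarrow>\<Delta> x. \<Sum>(v1,v2)\<leftarrow>\<Delta> v. F u v1 v2)"
  using teq3_tril[OF coass assms] unfolding sum_coass1 sum_coass2 .


lemma bil_scaleH: "bil sH sH sH (\<lambda>u v. sH (\<phi> v) u)"
  by (rule bilI) (simp_all add: hsimps)

lemma I1: "(\<Sum>(a1,a2)\<leftarrow>\<Delta> a. sH (\<phi> (a2 * b)) (S a1)) = (\<Sum>(b1,b2)\<leftarrow>\<Delta> b. sH (\<phi> (a * b2)) b1)"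
proof -
  define F where "F u1 u2 v = (\<Sum>(b1,b2)\<leftarrow>\<Delta> b. sH (\<phi> (v * b2)) (S u1 * (u2 * b1)))" for u1 u2 v
  have trF: "tril sH sH sH sH F"
    by (rule trilI) (simp_all add: F_def hsimps sum_list_add2 sH_sum)
  have "(\<Sum>(a1,a2)\<leftarrow>\<Delta> a. sH (\<phi> (a2 * b)) (S a1)) = (\<Sum>(a1,a2)\<leftarrow>\<Delta> a. S a1 * (\<Sum>(u,v)\<leftarrow>\<Delta> (a2*b). sH (\<phi> v) u))"
    by (simp add: linv)
  also have "\<dots> = (\<Sum>(a1,a2)\<leftarrow>\<Delta> a. \<Sum>(x,y)\<leftarrow>\<Delta> a2. F a1 x y)"
    by (simp add: Dsum_mult[OF vsH bil_scaleH] sum_list_left_mult F_def)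
  also have "\<dots> = (\<Sum>(u,v)\<leftarrow>\<Delta> a. \<Sum>(u1,u2)\<leftarrow>\<Delta> u. F u1 u2 v)"
    by (rule sym[OF coass_sum[OF vsH trF]])
  also have "\<dots> = (\<Sum>(u,v)\<leftarrow>\<Delta> a. \<Sum>(b1,b2)\<leftarrow>\<Delta> b. sH (\<phi> (v * b2)) (sH (\<epsilon> u) b1))"
  proof (rule sum_list_cong2)
    fix u v
    have "(\<Sum>(b1,b2)\<leftarrow>\<Delta> b. sH (\<phi> (v * b2)) (sH (\<epsilon> u) b1))
        = (\<Sum>(b1,b2)\<leftarrow>\<Delta> b. sH (\<phi> (v * b2)) ((\<Sum>(u1,u2)\<leftarrow>\<Delta> u. S u1 * u2) * b1))"
      by (simp add: antipL)
    also have "\<dots> = (\<Sum>(b1,b2)\<leftarrow>\<Delta> b. \<Sum>(u1,u2)\<leftarrow>\<Delta> u. sH (\<phi> (v * b2)) (S u1 * (u2 * b1)))"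
      by (simp add: sum_list_right_mult sH_sum mult.assoc)
    also have "\<dots> = (\<Sum>(u1,u2)\<leftarrow>\<Delta> u. F u1 u2 v)"
      unfolding F_def by (rule sum_list_swap)
    finally show "(\<Sum>(u1,u2)\<leftarrow>\<Delta> u. F u1 u2 v) = (\<Sum>(b1,b2)\<leftarrow>\<Delta> b. sH (\<phi> (v * b2)) (sH (\<epsilon> u) b1))"
      by simp
  qed
  also have "\<dots> = (\<Sum>(b1,b2)\<leftarrow>\<Delta> b. \<Sum>(u,v)\<leftarrow>\<Delta> a. sH (\<epsilon> u * \<phi> (v * b2)) b1)"
    by (subst sum_list_swap) (simp add: mult.commute)
  also have "\<dots> = (\<Sum>(b1,b2)\<leftarrow>\<Delta> b. sH (\<phi> ((\<Sum>(u,v)\<leftarrow>\<Delta> a. sH (\<epsilon> u) v) * b2)) b1)"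
    by (simp add: sum_list_right_mult phi_sum sH_sum_left)
  also have "\<dots> = (\<Sum>(b1,b2)\<leftarrow>\<Delta> b. sH (\<phi> (a * b2)) b1)"
    by (simp add: counitL)
  finally show ?thesis .
qed


definition psi where "psi x = \<phi> (S x)"
lemma psi_add[simp]: "psi (x + y) = psi x + psi y" by (simp add: psi_def)
lemma psi_scale[simp]: "psi (sH c x) = c * psi x" by (simp add: psi_def)
lemma psi_zero[simp]: "psi 0 = 0" by (simp add: psi_def)
lemma psi_sum: "psi (\<Sum>(u,v)\<leftarrow>L. f u v) = (\<Sum>(u,v)\<leftarrow>L. psi (f u v))"
  by (simp add: psi_def S_sum phi_sum)
lemma psi_delta: "psi x = \<phi> (x * \<delta>)" by (simp add: psi_def phi_S)
lemma rinv': "(\<Sum>(u,v)\<leftarrow>\<Delta> h. sH (psi u) v) = sH (psi h) 1"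
  using rinv by (simp add: psi_def)

lemma psi_nz: "\<exists>h. psi h \<noteq> 0"
proof -
  obtain h where h: "\<phi> h \<noteq> 0" using phi_nz by blast
  obtain d where d: "\<delta> * d = 1" "d * \<delta> = 1" using delta_inv by blast
  have "psi (h * d) = \<phi> h" by (simp add: psi_delta mult.assoc d)
  with h show ?thesis by metis
qed

lemma bil_psiH: "bil sH sH sH (\<lambda>u v. sH (psi u) v)"
  by (rule bilI) (simp_all add: hsimps)

lemma I2: "(\<Sum>(x1,x2)\<leftarrow>\<Delta> x. sH (psi (b * x1)) (S x2)) = (\<Sum>(b1,b2)\<leftarrow>\<Delta> b. sH (psi (b1 * x)) b2)"
proof -
  define G where "G y z w = (\<Sum>(b1,b2)\<leftarrow>\<Delta> b. sH (psi (b1 * y)) (b2 * z * S w))" for y z w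
  have trG: "tril sH sH sH sH G"
    by (rule trilI) (simp_all add: G_def hsimps sum_list_add2 sH_sum)
  have "(\<Sum>(x1,x2)\<leftarrow>\<Delta> x. sH (psi (b * x1)) (S x2)) = (\<Sum>(x1,x2)\<leftarrow>\<Delta> x. (\<Sum>(u,v)\<leftarrow>\<Delta> (b*x1). sH (psi u) v) * S x2)"
    by (simp add: rinv')
  also have "\<dots> = (\<Sum>(x1,x2)\<leftarrow>\<Delta> x. \<Sum>(b1,b2)\<leftarrow>\<Delta> b. \<Sum>(y,z)\<leftarrow>\<Delta> x1. sH (psi (b1 * y)) (b2 * z * S x2))"
    by (simp add: Dsum_mult[OF vsH bil_psiH] sum_list_right_mult)
  also have "\<dots> = (\<Sum>(x1,x2)\<leftarrow>\<Delta> x. \<Sum>(y,z)\<leftarrow>\<Delta> x1. G y z x2)"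
    unfolding G_def by (subst sum_list_swap) (rule refl)
  also have "\<dots> = (\<Sum>(u,v)\<leftarrow>\<Delta> x. \<Sum>(v1,v2)\<leftarrow>\<Delta> v. G u v1 v2)"
    by (rule coass_sum[OF vsH trG])
  also have "\<dots> = (\<Sum>(u,v)\<leftarrow>\<Delta> x. \<Sum>(b1,b2)\<leftarrow>\<Delta> b. sH (psi (b1 * u)) (sH (\<epsilon> v) b2))"
  proof (rule sum_list_cong2)
    fix u v
    have "(\<Sum>(b1,b2)\<leftarrow>\<Delta> b. sH (psi (b1 * u)) (sH (\<epsilon> v) b2))
        = (\<Sum>(b1,b2)\<leftarrow>\<Delta> b. sH (psi (b1 * u)) (b2 * (\<Sum>(v1,v2)\<leftarrow>\<Delta> v. v1 * S v2)))"
      by (simp add: antipR)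
    also have "\<dots> = (\<Sum>(b1,b2)\<leftarrow>\<Delta> b. \<Sum>(v1,v2)\<leftarrow>\<Delta> v. sH (psi (b1 * u)) (b2 * v1 * S v2))"
      by (simp add: sum_list_left_mult sH_sum mult.assoc)
    also have "\<dots> = (\<Sum>(v1,v2)\<leftarrow>\<Delta> v. G u v1 v2)"
      unfolding G_def by (rule sum_list_swap)
    finally show "(\<Sum>(v1,v2)\<leftarrow>\<Delta> v. G u v1 v2) = (\<Sum>(b1,b2)\<leftarrow>\<Delta> b. sH (psi (b1 * u)) (sH (\<epsilon> v) b2))"
      by simp
  qed
  also have "\<dots> = (\<Sum>(b1,b2)\<leftarrow>\<Delta> b. \<Sum>(u,v)\<leftarrow>\<Delta> x. sH (\<epsilon> v * psi (b1 * u)) b2)"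
    by (subst sum_list_swap) (simp add: mult.commute)
  also have "\<dots> = (\<Sum>(b1,b2)\<leftarrow>\<Delta> b. sH (psi (b1 * (\<Sum>(u,v)\<leftarrow>\<Delta> x. sH (\<epsilon> v) u))) b2)"
    by (simp add: sum_list_left_mult psi_sum sH_sum_left)
  also have "\<dots> = (\<Sum>(b1,b2)\<leftarrow>\<Delta> b. sH (psi (b1 * x)) b2)"
    by (simp add: counitR)
  finally show ?thesis .
qed


lemma lam_sum: "lin sH (*) l \<Longrightarrow> l (\<Sum>(u,v)\<leftarrow>L. sH (f u v) (g u v)) = (\<Sum>(u,v)\<leftarrow>L. f u v * l (g u v))"
  by (simp add: lin_sum_list2 lin_scale)

lemma NR_decomp:
  assumes w: "\<forall>a. \<phi> (a * w) = 0"
  shows "\<exists>E lam. finite E \<and> (\<forall>u v. (u,v) \<in> set (\<Delta> w) \<longrightarrow> u = (\<Sum>e\<in>E. sH (lam e u) e))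
     \<and> (\<forall>e a. \<phi> (a * (\<Sum>(u,v)\<leftarrow>\<Delta> w. sH (lam e u) v)) = 0)"
proof -
  obtain E lam where E: "finite E" "\<forall>e. lin sH (*) (lam e)"
    "\<forall>u\<in>fst ` set (\<Delta> w). u = (\<Sum>e\<in>E. sH (lam e u) e)"
    using decomp[OF vsH, of "fst ` set (\<Delta> w)"] by auto
  have z: "(\<Sum>(u,v)\<leftarrow>\<Delta> w. sH (\<phi> (a * v)) u) = 0" for a
    using I1[where a=a and b=w] w by simp
  have "\<phi> (a * (\<Sum>(u,v)\<leftarrow>\<Delta> w. sH (lam e u) v)) = 0" for e a
  proof -
    have "\<phi> (a * (\<Sum>(u,v)\<leftarrow>\<Delta> w. sH (lam e u) v)) = (\<Sum>(u,v)\<leftarrow>\<Delta> w. lam e u * \<phi> (a * v))"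
      by (simp add: sum_list_left_mult phi_sum)
    also have "\<dots> = lam e (\<Sum>(u,v)\<leftarrow>\<Delta> w. sH (\<phi> (a * v)) u)"
      by (subst lam_sum[OF E(2)[rule_format, of e]]) (simp add: mult.commute)
    also have "\<dots> = 0" using z E(2) lin_zero by metis
    finally show ?thesis .
  qed
  moreover have "\<forall>u v. (u,v) \<in> set (\<Delta> w) \<longrightarrow> u = (\<Sum>e\<in>E. sH (lam e u) e)"
    using E(3) by force
  ultimately show ?thesis using E(1) by blast
qed

lemma NR_eps:
  assumes w: "\<forall>a. \<phi> (a * w) = 0"
  shows "\<epsilon> w = 0"
proof -
  obtain E lam where E: "finite E" "\<forall>u v. (u,v) \<in> set (\<Delta> w) \<longrightarrow> u = (\<Sum>e\<in>E. sH (lam e u) e)"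
     "\<forall>e a. \<phi> (a * (\<Sum>(u,v)\<leftarrow>\<Delta> w. sH (lam e u) v)) = 0"
    using NR_decomp[OF w] by blast
  have "sH (\<epsilon> w) 1 = (\<Sum>(u,v)\<leftarrow>\<Delta> w. S u * v)" by (simp add: antipL)
  also have "\<dots> = (\<Sum>e\<in>E. S e * (\<Sum>(u,v)\<leftarrow>\<Delta> w. sH (lam e u) v))"
    by (rule decomp_sum[OF E(1)]) (use E(2) in \<open>auto simp: hsimps\<close>)
  finally have eq: "sH (\<epsilon> w) 1 = (\<Sum>e\<in>E. S e * (\<Sum>(u,v)\<leftarrow>\<Delta> w. sH (lam e u) v))" .
  have "\<epsilon> w * \<phi> a = 0" for a
  proof -
    have "\<epsilon> w * \<phi> a = \<phi> (a * sH (\<epsilon> w) 1)" by simp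
    also have "\<dots> = (\<Sum>e\<in>E. \<phi> ((a * S e) * (\<Sum>(u,v)\<leftarrow>\<Delta> w. sH (lam e u) v)))"
      unfolding eq by (simp add: sum_distrib_left lin_sum[OF phi_lin] mult.assoc)
    also have "\<dots> = 0" using E(3) by simp
    finally show ?thesis .
  qed
  then show ?thesis using phi_nz by auto
qed

lemma NR:
  assumes w: "\<forall>a. \<phi> (a * w) = 0"
  shows "w = 0"
proof -
  obtain E lam where E: "finite E" "\<forall>u v. (u,v) \<in> set (\<Delta> w) \<longrightarrow> u = (\<Sum>e\<in>E. sH (lam e u) e)"
     "\<forall>e a. \<phi> (a * (\<Sum>(u,v)\<leftarrow>\<Delta> w. sH (lam e u) v)) = 0"
    using NR_decomp[OF w] by blast
  have "w = (\<Sum>(u,v)\<leftarrow>\<Delta> w. sH (\<epsilon> v) u)" by (simp add: counitR)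
  also have "\<dots> = (\<Sum>e\<in>E. sH (\<epsilon> (\<Sum>(u,v)\<leftarrow>\<Delta> w. sH (lam e u) v)) e)"
    by (rule decomp_sum[OF E(1)]) (use E(2) in \<open>auto simp: hsimps\<close>)
  also have "\<dots> = 0" using NR_eps E(3) by simp
  finally show ?thesis .
qed

lemma NLpsi_decomp:
  assumes w: "\<forall>a. psi (w * a) = 0"
  shows "\<exists>E lam. finite E \<and> (\<forall>u v. (u,v) \<in> set (\<Delta> w) \<longrightarrow> v = (\<Sum>e\<in>E. sH (lam e v) e))
     \<and> (\<forall>e a. psi ((\<Sum>(u,v)\<leftarrow>\<Delta> w. sH (lam e v) u) * a) = 0)"
proof -
  obtain E lam where E: "finite E" "\<forall>e. lin sH (*) (lam e)"
    "\<forall>u\<in>snd ` set (\<Delta> w). u = (\<Sum>e\<in>E. sH (lam e u) e)"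
    using decomp[OF vsH, of "snd ` set (\<Delta> w)"] by auto
  have z: "(\<Sum>(u,v)\<leftarrow>\<Delta> w. sH (psi (u * a)) v) = 0" for a
    using I2[where x=a and b=w] w by simp
  have "psi ((\<Sum>(u,v)\<leftarrow>\<Delta> w. sH (lam e v) u) * a) = 0" for e a
  proof -
    have "psi ((\<Sum>(u,v)\<leftarrow>\<Delta> w. sH (lam e v) u) * a) = (\<Sum>(u,v)\<leftarrow>\<Delta> w. lam e v * psi (u * a))"
      by (simp add: sum_list_right_mult psi_sum)
    also have "\<dots> = lam e (\<Sum>(u,v)\<leftarrow>\<Delta> w. sH (psi (u * a)) v)"
      by (subst lam_sum[OF E(2)[rule_format, of e]]) (simp add: mult.commute)
    also have "\<dots> = 0" using z E(2) lin_zero by metis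
    finally show ?thesis .
  qed
  moreover have "\<forall>u v. (u,v) \<in> set (\<Delta> w) \<longrightarrow> v = (\<Sum>e\<in>E. sH (lam e v) e)"
    using E(3) by force
  ultimately show ?thesis using E(1) by blast
qed

lemma psi_sum_set: "psi (sum f A) = (\<Sum>x\<in>A. psi (f x))"
  by (induction A rule: infinite_finite_induct) auto

lemma NLpsi_eps:
  assumes w: "\<forall>a. psi (w * a) = 0"
  shows "\<epsilon> w = 0"
proof -
  obtain E lam where E: "finite E" "\<forall>u v. (u,v) \<in> set (\<Delta> w) \<longrightarrow> v = (\<Sum>e\<in>E. sH (lam e v) e)"
     "\<forall>e a. psi ((\<Sum>(u,v)\<leftarrow>\<Delta> w. sH (lam e v) u) * a) = 0"
    using NLpsi_decomp[OF w] by blast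
  have "sH (\<epsilon> w) 1 = (\<Sum>(u,v)\<leftarrow>\<Delta> w. u * S v)" by (simp add: antipR)
  also have "\<dots> = (\<Sum>e\<in>E. (\<Sum>(u,v)\<leftarrow>\<Delta> w. sH (lam e v) u) * S e)"
    by (rule decomp_sum2[OF E(1)]) (use E(2) in \<open>auto simp: hsimps\<close>)
  finally have eq: "sH (\<epsilon> w) 1 = (\<Sum>e\<in>E. (\<Sum>(u,v)\<leftarrow>\<Delta> w. sH (lam e v) u) * S e)" .
  have "\<epsilon> w * psi a = 0" for a
  proof -
    have "\<epsilon> w * psi a = psi (sH (\<epsilon> w) 1 * a)" by simp
    also have "\<dots> = (\<Sum>e\<in>E. psi ((\<Sum>(u,v)\<leftarrow>\<Delta> w. sH (lam e v) u) * (S e * a)))"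
      unfolding eq by (simp add: sum_distrib_right psi_sum_set mult.assoc)
    also have "\<dots> = 0" using E(3) by simp
    finally show ?thesis .
  qed
  then show ?thesis using psi_nz by auto
qed

lemma NLpsi:
  assumes w: "\<forall>a. psi (w * a) = 0"
  shows "w = 0"
proof -
  obtain E lam where E: "finite E" "\<forall>u v. (u,v) \<in> set (\<Delta> w) \<longrightarrow> v = (\<Sum>e\<in>E. sH (lam e v) e)"
     "\<forall>e a. psi ((\<Sum>(u,v)\<leftarrow>\<Delta> w. sH (lam e v) u) * a) = 0"
    using NLpsi_decomp[OF w] by blast
  have "w = (\<Sum>(u,v)\<leftarrow>\<Delta> w. sH (\<epsilon> u) v)" by (simp add: counitL)
  also have "\<dots> = (\<Sum>e\<in>E. sH (\<epsilon> (\<Sum>(u,v)\<leftarrow>\<Delta> w. sH (lam e v) u)) e)"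
    by (rule decomp_sum2[OF E(1)]) (use E(2) in \<open>auto simp: hsimps\<close>)
  also have "\<dots> = 0" using NLpsi_eps E(3) by simp
  finally show ?thesis .
qed

lemma NL:
  assumes w: "\<forall>a. \<phi> (w * a) = 0"
  shows "w = 0"
  by (rule NLpsi) (use w in \<open>simp add: psi_delta mult.assoc\<close>)


lemma S_surj: "\<exists>h. S h = c"
proof (rule ccontr)
  assume nc: "\<nexists>h. S h = c"
  interpret P: vector_space_pair sH "(*) :: 'k \<Rightarrow> 'k \<Rightarrow> 'k"
    using vsH vs_field by (simp add: vector_space_pair_def)
  define X where "X = range (\<lambda>(a,b). \<Sum>(b1,b2)\<leftarrow>\<Delta> b. sH (\<phi> (a * b2)) b1)"
  have XS: "X \<subseteq> range S"
  proof
    fix x assume "x \<in> X"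
    then obtain a b where x: "x = (\<Sum>(b1,b2)\<leftarrow>\<Delta> b. sH (\<phi> (a * b2)) b1)" unfolding X_def by auto
    have "x = S (\<Sum>(a1,a2)\<leftarrow>\<Delta> a. sH (\<phi> (a2 * b)) a1)"
      unfolding x I1[symmetric] by (simp add: S_sum)
    then show "x \<in> range S" by blast
  qed
  have subS: "H.subspace (range S)"
  proof (rule H.subspaceI)
    have "S 0 = 0" by simp
    then show "0 \<in> range S" by (metis rangeI)
    show "x + y \<in> range S" if hx: "x \<in> range S" and hy: "y \<in> range S" for x y
    proof -
      obtain a where "x = S a" using hx by blast
      moreover obtain b where "y = S b" using hy by blast
      ultimately have ab: "x = S a" "y = S b" by auto
      then have "x + y = S (a + b)" by simp
      then show ?thesis by blast
    qed
    show "sH c x \<in> range S" if hx: "x \<in> range S" for c x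
    proof -
      obtain a where ab: "x = S a" using hx by blast
      then have "sH c x = S (sH c a)" by simp
      then show ?thesis by blast
    qed
  qed
  have "H.span X \<subseteq> range S" by (rule H.span_minimal[OF XS subS])
  then have cX: "c \<notin> H.span X" using nc by blast
  obtain B where B: "B \<subseteq> X" "H.independent B" "X \<subseteq> H.span B"
    using H.maximal_independent_subset by blast
  have "H.span B \<subseteq> H.span X" using B(1) H.span_mono by blast
  then have cB: "c \<notin> H.span B" using cX by blast
  have indep: "H.independent (insert c B)" using H.independent_insertI[OF cB B(2)] .
  obtain g where g: "Vector_Spaces.linear sH (*) g" "\<forall>x\<in>insert c B. g x = (if x = c then 1 else 0)"
    using P.linear_independent_extend[OF indep, of "\<lambda>x. if x = c then 1 else 0"] by blast
  have lg: "lin sH (*) g" using g(1) lin_iff_linear[OF vsH vs_field] by simp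
  have gB: "g x = 0" if "x \<in> B" for x
  proof -
    have "x \<noteq> c" using that cB H.span_base by blast
    then show ?thesis using g(2) that by auto
  qed
  have gX: "g x = 0" if "x \<in> X" for x
    using P.linear_eq_0_on_span[OF g(1) gB] B(3) that by blast
  have "(\<Sum>(b1,b2)\<leftarrow>\<Delta> b. sH (g b1) b2) = 0" for b
  proof (rule NR, rule allI)
    fix a
    have "\<phi> (a * (\<Sum>(b1,b2)\<leftarrow>\<Delta> b. sH (g b1) b2)) = (\<Sum>(b1,b2)\<leftarrow>\<Delta> b. g b1 * \<phi> (a * b2))"
      by (simp add: sum_list_left_mult phi_sum)
    also have "\<dots> = g (\<Sum>(b1,b2)\<leftarrow>\<Delta> b. sH (\<phi> (a * b2)) b1)"
      by (subst lam_sum[OF lg]) (simp add: mult.commute)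
    also have "\<dots> = 0" by (rule gX) (auto simp: X_def)
    finally show "\<phi> (a * (\<Sum>(b1,b2)\<leftarrow>\<Delta> b. sH (g b1) b2)) = 0" .
  qed
  then have "\<epsilon> (\<Sum>(b1,b2)\<leftarrow>\<Delta> c. sH (g b1) b2) = 0" by simp
  moreover have "\<epsilon> (\<Sum>(b1,b2)\<leftarrow>\<Delta> c. sH (g b1) b2) = g c"
  proof -
    have "\<epsilon> (\<Sum>(b1,b2)\<leftarrow>\<Delta> c. sH (g b1) b2) = (\<Sum>(b1,b2)\<leftarrow>\<Delta> c. \<epsilon> b2 * g b1)"
      by (simp add: eps_sum mult.commute)
    also have "\<dots> = g (\<Sum>(b1,b2)\<leftarrow>\<Delta> c. sH (\<epsilon> b2) b1)"
      by (subst lam_sum[OF lg]) simp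
    also have "\<dots> = g c" by (simp add: counitR)
    finally show ?thesis .
  qed
  moreover have "g c = 1" using g(2) by simp
  ultimately show False by simp
qed

lemma phi_left: "(\<Sum>(u,v)\<leftarrow>\<Delta> h. sH (\<phi> u) v) = sH (\<phi> h) \<delta>"
proof -
  obtain d where d: "\<delta> * d = 1" "d * \<delta> = 1" using delta_inv by blast
  have Dd: "teq2 sH sH (\<Delta> d) [(d, d)]"
    unfolding teq2_def
  proof (intro allI impI)
    fix f assume f: "bilin sH sH f"
    define g where "g u v = f (u * d) (v * d)" for u v
    have bg: "bilin sH sH g" using f unfolding bilin_def g_def lin_def by (simp add: distrib_right)
    have bg': "bilin sH sH (\<lambda>x y. g (u * x) (v * y))" for u v
      using bg unfolding bilin_def lin_def by (simp add: distrib_left)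
    have "(\<Sum>(u,v)\<leftarrow>\<Delta> (d * \<delta>). g u v) = (\<Sum>(a,b)\<leftarrow>\<Delta> d. \<Sum>(x,y)\<leftarrow>\<Delta> \<delta>. g (a * x) (b * y))"
      using teq2_scalar[OF D_mult bg] by (simp add: sum_tmult)
    also have "\<dots> = (\<Sum>(a,b)\<leftarrow>\<Delta> d. g (a * \<delta>) (b * \<delta>))"
      by (rule sum_list_cong2) (simp add: teq2_scalar[OF D_delta bg'])
    also have "\<dots> = (\<Sum>(a,b)\<leftarrow>\<Delta> d. f a b)"
      by (simp add: g_def mult.assoc d)
    finally have 1: "(\<Sum>(u,v)\<leftarrow>\<Delta> (d * \<delta>). g u v) = (\<Sum>(a,b)\<leftarrow>\<Delta> d. f a b)" .
    have "(\<Sum>(u,v)\<leftarrow>\<Delta> (d * \<delta>). g u v) = g 1 1"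
      using teq2_scalar[OF D_one bg] by (simp add: d)
    then show "(\<Sum>(u,v)\<leftarrow>\<Delta> d. f u v) = (\<Sum>(u,v)\<leftarrow>[(d, d)]. f u v)"
      using 1 by (simp add: g_def)
  qed
  have bp: "bil sH sH sH (\<lambda>u v. sH (psi (u * d)) (v * d))" by (rule bilI) (simp_all add: hsimps)
  have bp2: "bil sH sH sH (\<lambda>x y. sH (psi (u * x)) (v * y))" for u v by (rule bilI) (simp_all add: hsimps)
  have "sH (\<phi> h) 1 = sH (psi (h * d)) 1" by (simp add: psi_delta mult.assoc d)
  also have "\<dots> = (\<Sum>(u,v)\<leftarrow>\<Delta> (h * d). sH (psi u) v)" by (simp add: rinv')
  also have "\<dots> = (\<Sum>(a,b)\<leftarrow>\<Delta> h. \<Sum>(x,y)\<leftarrow>\<Delta> d. sH (psi (a * x)) (b * y))"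
    by (simp add: Dsum_mult[OF vsH bil_psiH])
  also have "\<dots> = (\<Sum>(a,b)\<leftarrow>\<Delta> h. sH (psi (a * d)) (b * d))"
    by (rule sum_list_cong2) (simp add: teq2_bil[OF Dd vsH bp2])
  also have "\<dots> = (\<Sum>(a,b)\<leftarrow>\<Delta> h. sH (\<phi> a) b) * d"
    by (simp add: psi_delta mult.assoc d sum_list_right_mult)
  finally have "sH (\<phi> h) 1 * \<delta> = (\<Sum>(a,b)\<leftarrow>\<Delta> h. sH (\<phi> a) b) * d * \<delta>" by simp
  then show ?thesis by (simp add: mult.assoc d)
qed

end



lemma vs_scale_sum:
  assumes "vector_space s" shows "s c (\<Sum>(u,v)\<leftarrow>L. f u v) = (\<Sum>(u,v)\<leftarrow>L. s c (f u v))"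
proof -
  interpret V: vector_space s by fact
  show ?thesis by (induction L) (auto simp: V.scale_right_distrib)
qed

locale gal_ctx = hopf_ctx sH \<Delta> \<epsilon> S \<phi> \<delta>
  for sH :: "'k::field \<Rightarrow> 'h::ring_1 \<Rightarrow> 'h" and \<Delta> \<epsilon> S \<phi> \<delta> +
  fixes sA :: "'k \<Rightarrow> 'a::ring \<Rightarrow> 'a" and \<alpha> :: "'a \<Rightarrow> ('a \<times> 'h) list"
    and I :: "'i set" and p :: "'i \<Rightarrow> 'a"
  assumes gal: "I_galois_object sA sH \<Delta> \<epsilon> \<alpha> I p"
begin

lemma cma: "comodule_algebra sA sH \<Delta> \<epsilon> \<alpha>" using gal unfolding I_galois_object_def by blast
lemma kaA: "k_algebra sA" using cma unfolding comodule_algebra_def by blast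
lemma vsA: "vector_space sA" using kaA unfolding k_algebra_def by blast
sublocale A: vector_space sA by (rule vsA)

lemma sA_multL[simp]: "sA c x * y = sA c (x * y)" using kaA unfolding k_algebra_def by metis
lemma sA_multR[simp]: "x * sA c y = sA c (x * y)" using kaA unfolding k_algebra_def by metis

lemma a_add: "teq2 sA sH (\<alpha> (x + y)) (\<alpha> x @ \<alpha> y)" using cma unfolding comodule_algebra_def by blast
lemma a_scale: "teq2 sA sH (\<alpha> (sA c x)) (map (\<lambda>(u,v). (sA c u, v)) (\<alpha> x))" using cma unfolding comodule_algebra_def by blast
lemma a_mult: "teq2 sA sH (\<alpha> (x * y)) (tmult (\<alpha> x) (\<alpha> y))" using cma unfolding comodule_algebra_def by blast
lemma a_coass: "teq3 sA sH sH [(b, g, h). (a, h) \<leftarrow> \<alpha> x, (b, g) \<leftarrow> \<alpha> a]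
                          [(a, h1, h2). (a, h) \<leftarrow> \<alpha> x, (h1, h2) \<leftarrow> \<Delta> h]" using cma unfolding comodule_algebra_def by blast
lemma a_counit: "(\<Sum>(a,h)\<leftarrow>\<alpha> x. sA (\<epsilon> h) a) = x" using cma unfolding comodule_algebra_def by blast

definition coinvA where "coinvA = coinv sA sH \<alpha>"
lemma p_nz: "i \<in> I \<Longrightarrow> p i \<noteq> 0" using gal unfolding I_galois_object_def by blast
lemma p_coinv: "i \<in> I \<Longrightarrow> p i \<in> coinvA" using gal unfolding I_galois_object_def coinvA_def by blast
lemma p_orth: "i \<in> I \<Longrightarrow> j \<in> I \<Longrightarrow> p i * p j = (if i = j then p i else 0)"
  using gal unfolding I_galois_object_def by blast
lemma coinv_rep: "b \<in> coinvA \<Longrightarrow> \<exists>F c. finite F \<and> F \<subseteq> I \<and> b = (\<Sum>i\<in>F. sA (c i) (p i))"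
  using gal unfolding I_galois_object_def coinvA_def by blast
lemma gal_inj: "teq2 sA sH (galois_map \<alpha> xs) (galois_map \<alpha> ys) \<Longrightarrow> teqB sA coinvA xs ys"
  using gal unfolding I_galois_object_def coinvA_def by blast
lemma gal_surj: "\<exists>xs. teq2 sA sH (galois_map \<alpha> xs) zs"
  using gal unfolding I_galois_object_def by blast

lemma coinvA_iff: "b \<in> coinvA \<longleftrightarrow> teq2 sA sH (\<alpha> b) [(b, 1)]"
  unfolding coinvA_def coinv_def by simp

lemma lin_sA: "lin sA sA (sA c)" unfolding lin_def by (simp add: A.scale_right_distrib mult.commute)
lemma sA_sum: "sA c (\<Sum>(u,v)\<leftarrow>L. f u v) = (\<Sum>(u,v)\<leftarrow>L. sA c (f u v))" using lin_sum_list2[OF lin_sA] .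
lemma sA_sum_left: "sA (\<Sum>(u,v)\<leftarrow>L. f u v) x = (\<Sum>(u,v)\<leftarrow>L. sA (f u v) x)"
  by (induction L) (auto simp: A.scale_left_distrib)

lemmas asimps = A.scale_right_distrib A.scale_left_distrib hsimps

lemma Asum_add:
  fixes sU :: "'k \<Rightarrow> 'u::ab_group_add \<Rightarrow> 'u"
  assumes "vector_space sU" "bil sA sH sU F"
  shows "(\<Sum>(u,v)\<leftarrow>\<alpha> (x + y). F u v) = (\<Sum>(u,v)\<leftarrow>\<alpha> x. F u v) + (\<Sum>(u,v)\<leftarrow>\<alpha> y. F u v)"
  using teq2_bil[OF a_add assms] by simp

lemma Asum_scale:
  fixes sU :: "'k \<Rightarrow> 'u::ab_group_add \<Rightarrow> 'u"
  assumes "vector_space sU" "bil sA sH sU F"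
  shows "(\<Sum>(u,v)\<leftarrow>\<alpha> (sA c x). F u v) = sU c (\<Sum>(u,v)\<leftarrow>\<alpha> x. F u v)"
proof -
  interpret U: vector_space sU by fact
  have l: "lin sU sU (sU c)" unfolding lin_def
    by (simp add: U.scale_right_distrib mult.commute)
  have "(\<Sum>(u,v)\<leftarrow>\<alpha> (sA c x). F u v) = (\<Sum>(u,v)\<leftarrow>\<alpha> x. F (sA c u) v)"
    using teq2_bil[OF a_scale assms] unfolding sum_map_scale .
  also have "\<dots> = (\<Sum>(u,v)\<leftarrow>\<alpha> x. sU c (F u v))"
    using assms(2) unfolding bil_def lin_def by simp
  also have "\<dots> = sU c (\<Sum>(u,v)\<leftarrow>\<alpha> x. F u v)" by (rule sym[OF lin_sum_list2[OF l]])
  finally show ?thesis .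
qed

lemma Asum_mult:
  fixes sU :: "'k \<Rightarrow> 'u::ab_group_add \<Rightarrow> 'u"
  assumes "vector_space sU" "bil sA sH sU F"
  shows "(\<Sum>(u,v)\<leftarrow>\<alpha> (x * y). F u v) = (\<Sum>(a,b)\<leftarrow>\<alpha> x. \<Sum>(c,d)\<leftarrow>\<alpha> y. F (a*c) (b*d))"
  using teq2_bil[OF a_mult assms] by (simp add: sum_tmult)

lemma Asum_zero:
  fixes sU :: "'k \<Rightarrow> 'u::ab_group_add \<Rightarrow> 'u"
  assumes "vector_space sU" "bil sA sH sU F"
  shows "(\<Sum>(u,v)\<leftarrow>\<alpha> 0. F u v) = 0"
  using Asum_add[OF assms, of 0 0] by (intro self_add) simp

lemma Asum_sum_list:
  fixes sU :: "'k \<Rightarrow> 'u::ab_group_add \<Rightarrow> 'u"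
  assumes "vector_space sU" "bil sA sH sU F"
  shows "(\<Sum>(u,v)\<leftarrow>\<alpha> (\<Sum>(a,b)\<leftarrow>L. G a b). F u v) = (\<Sum>(a,b)\<leftarrow>L. \<Sum>(u,v)\<leftarrow>\<alpha> (G a b). F u v)"
proof (induction L)
  case Nil
  then show ?case using Asum_zero[OF assms] by simp
next
  case (Cons a L)
  then show ?case by (cases a) (simp add: Asum_add[OF assms])
qed

lemma Asum_coinvL:
  fixes sU :: "'k \<Rightarrow> 'u::ab_group_add \<Rightarrow> 'u"
  assumes "vector_space sU" "bil sA sH sU F" and b: "b \<in> coinvA"
  shows "(\<Sum>(u,v)\<leftarrow>\<alpha> (b * x). F u v) = (\<Sum>(c,g)\<leftarrow>\<alpha> x. F (b * c) g)"
proof -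
  have bG: "bil sA sH sU (\<lambda>a h. \<Sum>(c,g)\<leftarrow>\<alpha> x. F (a*c) (h*g))"
    using assms(1,2) unfolding bil_def lin_def
    by (simp add: distrib_right distrib_left sum_list_add2 vs_scale_sum)
  have "(\<Sum>(u,v)\<leftarrow>\<alpha> (b * x). F u v) = (\<Sum>(a,h)\<leftarrow>\<alpha> b. \<Sum>(c,g)\<leftarrow>\<alpha> x. F (a*c) (h*g))"
    by (rule Asum_mult[OF assms(1,2)])
  also have "\<dots> = (\<Sum>(c,g)\<leftarrow>\<alpha> x. F (b*c) (1*g))"
    using teq2_bil[OF b[unfolded coinvA_iff] assms(1) bG] by simp
  finally show ?thesis by simp
qed

lemma Asum_coinvR:
  fixes sU :: "'k \<Rightarrow> 'u::ab_group_add \<Rightarrow> 'u"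
  assumes "vector_space sU" "bil sA sH sU F" and b: "b \<in> coinvA"
  shows "(\<Sum>(u,v)\<leftarrow>\<alpha> (x * b). F u v) = (\<Sum>(c,g)\<leftarrow>\<alpha> x. F (c * b) g)"
proof -
  have bG: "bil sA sH sU (\<lambda>a h. F (c*a) (g*h))" for c g
    using assms(1,2) unfolding bil_def lin_def
    by (simp add: distrib_right distrib_left)
  have "(\<Sum>(u,v)\<leftarrow>\<alpha> (x * b). F u v) = (\<Sum>(c,g)\<leftarrow>\<alpha> x. \<Sum>(a,h)\<leftarrow>\<alpha> b. F (c*a) (g*h))"
    by (rule Asum_mult[OF assms(1,2)])
  also have "\<dots> = (\<Sum>(c,g)\<leftarrow>\<alpha> x. F (c*b) (g*1))"
    by (rule sum_list_cong2) (simp add: teq2_bil[OF b[unfolded coinvA_iff] assms(1) bG])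
  finally show ?thesis by simp
qed

lemma Acoass:
  fixes sX :: "'k \<Rightarrow> 'x::ab_group_add \<Rightarrow> 'x"
  assumes "vector_space sX" "tril sA sH sH sX F"
  shows "(\<Sum>(a,h)\<leftarrow>\<alpha> x. \<Sum>(b,g)\<leftarrow>\<alpha> a. F b g h) = (\<Sum>(a,h)\<leftarrow>\<alpha> x. \<Sum>(h1,h2)\<leftarrow>\<Delta> h. F a h1 h2)"
  using teq3_tril[OF a_coass assms] unfolding sum_coass1 sum_coass2 .


definition Phi where "Phi x = (\<Sum>(a,h)\<leftarrow>\<alpha> x. sA (\<phi> h) a)"

lemma bil_phiA: "bil sA sH sA (\<lambda>a h. sA (\<phi> h) a)"
  by (rule bilI) (simp_all add: asimps)

lemma Phi_add[simp]: "Phi (x + y) = Phi x + Phi y"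
  unfolding Phi_def by (rule Asum_add[OF vsA bil_phiA])
lemma Phi_scale[simp]: "Phi (sA c x) = sA c (Phi x)"
  unfolding Phi_def by (rule Asum_scale[OF vsA bil_phiA])
lemma Phi_zero[simp]: "Phi 0 = 0"
  unfolding Phi_def by (rule Asum_zero[OF vsA bil_phiA])

lemma Phi_coinv: "Phi x \<in> coinvA"
  unfolding coinvA_iff teq2_def
proof (intro allI impI)
  fix f assume f: "bilin sA sH f"
  have bf: "bil sA sH (*) f" using f bilin_bil by blast
  have l1: "lin sA (*) (\<lambda>u. f u v)" for v using f unfolding bilin_def by blast
  have l2: "lin sH (*) (f u)" for u using f unfolding bilin_def by blast
  have tr: "tril sA sH sH (*) (\<lambda>b g h. \<phi> h * f b g)"
    by (rule trilI) (simp_all add: lin_add[OF l1] lin_scale[OF l1] lin_add[OF l2] lin_scale[OF l2] algebra_simps)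
  have "(\<Sum>(u,v)\<leftarrow>\<alpha> (Phi x). f u v) = (\<Sum>(a,h)\<leftarrow>\<alpha> x. \<Sum>(u,v)\<leftarrow>\<alpha> (sA (\<phi> h) a). f u v)"
    unfolding Phi_def by (rule Asum_sum_list[OF vs_field bf])
  also have "\<dots> = (\<Sum>(a,h)\<leftarrow>\<alpha> x. \<Sum>(b,g)\<leftarrow>\<alpha> a. \<phi> h * f b g)"
    by (simp add: Asum_scale[OF vs_field bf] sum_list_left_mult)
  also have "\<dots> = (\<Sum>(a,h)\<leftarrow>\<alpha> x. \<Sum>(h1,h2)\<leftarrow>\<Delta> h. \<phi> h2 * f a h1)"
    by (rule Acoass[OF vs_field tr])
  also have "\<dots> = (\<Sum>(a,h)\<leftarrow>\<alpha> x. f a (\<Sum>(h1,h2)\<leftarrow>\<Delta> h. sH (\<phi> h2) h1))"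
    by (rule sum_list_cong2) (simp add: lin_sum_list2[OF l2] lin_scale[OF l2])
  also have "\<dots> = (\<Sum>(a,h)\<leftarrow>\<alpha> x. \<phi> h * f a 1)"
    by (rule sum_list_cong2) (simp add: linv lin_scale[OF l2])
  also have "\<dots> = f (Phi x) 1"
    unfolding Phi_def by (simp add: lin_sum_list2[OF l1] lin_scale[OF l1])
  finally show "(\<Sum>(u,v)\<leftarrow>\<alpha> (Phi x). f u v) = (\<Sum>(u,v)\<leftarrow>[(Phi x, 1)]. f u v)" by simp
qed

lemma pp: "w \<in> p ` I \<Longrightarrow> v \<in> p ` I \<Longrightarrow> w * v = (if w = v then v else 0)"
proof -
  assume "w \<in> p ` I" "v \<in> p ` I"
  then obtain i j where ij: "i \<in> I" "j \<in> I" "w = p j" "v = p i" by auto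
  show ?thesis
  proof (cases "i = j")
    case True then show ?thesis using ij p_orth by simp
  next
    case False
    have "p j \<noteq> p i"
    proof
      assume e: "p j = p i"
      have "p i = p i * p i" using p_orth[OF ij(1) ij(1)] by simp
      also have "\<dots> = p j * p i" using e by simp
      also have "\<dots> = 0" using p_orth[OF ij(2) ij(1)] False by simp
      finally show False using p_nz[OF ij(1)] by simp
    qed
    then show ?thesis using ij p_orth False by auto
  qed
qed

lemma p_indep: "A.independent (p ` I)"
  unfolding A.independent_explicit_module
proof (intro allI impI)
  fix t u v assume t: "finite t" "t \<subseteq> p ` I" "(\<Sum>v\<in>t. sA (u v) v) = 0" "v \<in> t"
  have "0 = (\<Sum>w\<in>t. sA (u w) w) * v" using t(3) by simp
  also have "\<dots> = (\<Sum>w\<in>t. sA (u w) (w * v))" by (simp add: sum_distrib_right)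
  also have "\<dots> = (\<Sum>w\<in>t. if w = v then sA (u v) v else 0)"
  proof (rule sum.cong[OF refl])
    fix w assume "w \<in> t"
    then have "w \<in> p ` I" "v \<in> p ` I" using t by auto
    then show "sA (u w) (w * v) = (if w = v then sA (u v) v else 0)" by (simp add: pp)
  qed
  also have "\<dots> = sA (u v) v" using t by simp
  finally have "sA (u v) v = 0" by simp
  moreover have "v \<noteq> 0" using t p_nz by auto
  ultimately show "u v = 0" by simp
qed

definition lam0 where "lam0 = (SOME l. lin sA (*) l \<and> (\<forall>i\<in>I. l (p i) = 1))"

lemma lam0: "lin sA (*) lam0 \<and> (\<forall>i\<in>I. lam0 (p i) = 1)"
proof -
  interpret P: vector_space_pair sA "(*) :: 'k \<Rightarrow> 'k \<Rightarrow> 'k"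
    using vsA vs_field by (simp add: vector_space_pair_def)
  obtain g where g: "Vector_Spaces.linear sA (*) g" "\<forall>x\<in>p ` I. g x = 1"
    using P.linear_independent_extend[OF p_indep, of "\<lambda>_. 1"] by blast
  have "lin sA (*) g" using g(1) lin_iff_linear[OF vsA vs_field] by simp
  then have "\<exists>l. lin sA (*) l \<and> (\<forall>i\<in>I. l (p i) = 1)" using g(2) by auto
  then show ?thesis unfolding lam0_def by (rule someI_ex)
qed

lemma lam0_lin: "lin sA (*) lam0" using lam0 by blast
lemma lam0_p: "i \<in> I \<Longrightarrow> lam0 (p i) = 1" using lam0 by blast

lemma lam0_rep:
  assumes "F \<subseteq> I" shows "lam0 (\<Sum>i\<in>F. sA (c i) (p i)) = sum c F"
proof -
  have "lam0 (\<Sum>i\<in>F. sA (c i) (p i)) = (\<Sum>i\<in>F. c i * lam0 (p i))"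
    by (simp add: lin_sum[OF lam0_lin] lin_scale[OF lam0_lin])
  also have "\<dots> = sum c F"
    by (rule sum.cong[OF refl]) (use assms in \<open>auto simp: lam0_p\<close>)
  finally show ?thesis .
qed

lemma phiA_eq: "phi_A sA \<alpha> \<phi> I p x = lam0 (Phi x)"
proof -
  have PM: "Phi_map sA \<alpha> \<phi> x = Phi x" unfolding Phi_map_def Phi_def ..
  obtain F c where Fc: "finite F" "F \<subseteq> I" "Phi x = (\<Sum>i\<in>F. sA (c i) (p i))"
    using coinv_rep[OF Phi_coinv] by blast
  show ?thesis
    unfolding phi_A_def scrS_def PM
  proof (rule the_equality)
    show "\<exists>F c. finite F \<and> F \<subseteq> I \<and> Phi x = (\<Sum>i\<in>F. sA (c i) (p i)) \<and> lam0 (Phi x) = sum c F"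
    proof (intro exI conjI)
      show "lam0 (Phi x) = sum c F" using Fc(3) lam0_rep[OF Fc(2), of c] by simp
    qed (use Fc in auto)
  next
    fix s assume "\<exists>F c. finite F \<and> F \<subseteq> I \<and> Phi x = (\<Sum>i\<in>F. sA (c i) (p i)) \<and> s = sum c F"
    then obtain F' c' where "F' \<subseteq> I" "Phi x = (\<Sum>i\<in>F'. sA (c' i) (p i))" "s = sum c' F'" by blast
    then show "s = lam0 (Phi x)" using lam0_rep[of F' c'] by simp
  qed
qed

lemma p_mult_rep:
  assumes "i \<in> I" "F \<subseteq> I" "finite F"
  shows "p i * (\<Sum>j\<in>F. sA (c j) (p j)) = (if i \<in> F then sA (c i) (p i) else 0)"
proof -
  have "p i * (\<Sum>j\<in>F. sA (c j) (p j)) = (\<Sum>j\<in>F. if i = j then sA (c j) (p i) else 0)"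
    by (simp add: sum_distrib_left) (rule sum.cong, use assms in \<open>auto simp: p_orth\<close>)
  also have "\<dots> = (if i \<in> F then sA (c i) (p i) else 0)" using assms(3) by (simp add: sum.delta)
  finally show ?thesis .
qed

lemma rep_mult_p:
  assumes "i \<in> I" "F \<subseteq> I" "finite F"
  shows "(\<Sum>j\<in>F. sA (c j) (p j)) * p i = (if i \<in> F then sA (c i) (p i) else 0)"
proof -
  have "(\<Sum>j\<in>F. sA (c j) (p j)) * p i = (\<Sum>j\<in>F. if i = j then sA (c j) (p i) else 0)"
    by (simp add: sum_distrib_right) (rule sum.cong, use assms in \<open>auto simp: p_orth\<close>)
  also have "\<dots> = (if i \<in> F then sA (c i) (p i) else 0)" using assms(3) by (simp add: sum.delta)
  finally show ?thesis .
qed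

lemma coinv_zeroL:
  assumes b: "b \<in> coinvA" and z: "\<forall>i\<in>I. lam0 (p i * b) = 0"
  shows "b = 0"
proof -
  obtain F c where Fc: "finite F" "F \<subseteq> I" "b = (\<Sum>i\<in>F. sA (c i) (p i))"
    using coinv_rep[OF b] by blast
  have "c i = 0" if "i \<in> F" for i
  proof -
    have "lam0 (p i * b) = c i" using that Fc p_mult_rep[of i F c]
      by (auto simp: lin_scale[OF lam0_lin] lam0_p)
    then show ?thesis using z Fc that by auto
  qed
  then show ?thesis using Fc by simp
qed

lemma coinv_zeroR:
  assumes b: "b \<in> coinvA" and z: "\<forall>i\<in>I. lam0 (b * p i) = 0"
  shows "b = 0"
proof -
  obtain F c where Fc: "finite F" "F \<subseteq> I" "b = (\<Sum>i\<in>F. sA (c i) (p i))"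
    using coinv_rep[OF b] by blast
  have "c i = 0" if "i \<in> F" for i
  proof -
    have "lam0 (b * p i) = c i" using that Fc rep_mult_p[of i F c]
      by (auto simp: lin_scale[OF lam0_lin] lam0_p)
    then show ?thesis using z Fc that by auto
  qed
  then show ?thesis using Fc by simp
qed

lemma Phi_coinvL: "b \<in> coinvA \<Longrightarrow> Phi (b * x) = b * Phi x"
  unfolding Phi_def by (simp add: Asum_coinvL[OF vsA bil_phiA] sum_list_left_mult)
lemma Phi_coinvR: "b \<in> coinvA \<Longrightarrow> Phi (x * b) = Phi x * b"
  unfolding Phi_def by (simp add: Asum_coinvR[OF vsA bil_phiA] sum_list_right_mult)

lemma phiA_zero_right:
  assumes "\<forall>x. phi_A sA \<alpha> \<phi> I p (x * a) = 0"
  shows "Phi (x * a) = 0"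
proof (rule coinv_zeroL[OF Phi_coinv], intro ballI)
  fix i assume i: "i \<in> I"
  have "lam0 (p i * Phi (x * a)) = lam0 (Phi ((p i * x) * a))"
    by (simp add: Phi_coinvL[OF p_coinv[OF i]] mult.assoc)
  also have "\<dots> = 0" using assms phiA_eq by simp
  finally show "lam0 (p i * Phi (x * a)) = 0" .
qed

lemma phiA_zero_left:
  assumes "\<forall>x. phi_A sA \<alpha> \<phi> I p (a * x) = 0"
  shows "Phi (a * x) = 0"
proof (rule coinv_zeroR[OF Phi_coinv], intro ballI)
  fix i assume i: "i \<in> I"
  have "lam0 (Phi (a * x) * p i) = lam0 (Phi (a * (x * p i)))"
    using Phi_coinvR[OF p_coinv[OF i], of "a*x"] by (simp add: mult.assoc)
  also have "\<dots> = 0" using assms phiA_eq by simp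
  finally show "lam0 (Phi (a * x) * p i) = 0" .
qed

end



context gal_ctx begin

lemma Phi_rep_all: "\<exists>FF cc. \<forall>y. finite (FF y) \<and> FF y \<subseteq> I \<and> Phi y = (\<Sum>i\<in>FF y. sA (cc y i) (p i))"
proof -
  have "\<forall>y. \<exists>Fc. finite (fst Fc) \<and> fst Fc \<subseteq> I \<and> Phi y = (\<Sum>i\<in>fst Fc. sA (snd Fc i) (p i))"
    using coinv_rep[OF Phi_coinv] by fastforce
  then obtain R where "\<forall>y. finite (fst (R y)) \<and> fst (R y) \<subseteq> I \<and> Phi y = (\<Sum>i\<in>fst (R y). sA (snd (R y) i) (p i))"
    by metis
  then show ?thesis by (intro exI[of _ "\<lambda>y. fst (R y)"] exI[of _ "\<lambda>y. snd (R y)"]) blast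
qed

lemma p_sum_idemL: "i \<in> F \<Longrightarrow> F \<subseteq> I \<Longrightarrow> finite F \<Longrightarrow> p i * (\<Sum>j\<in>F. p j) = p i"
proof -
  assume a: "i \<in> F" "F \<subseteq> I" "finite F"
  have "p i * (\<Sum>j\<in>F. p j) = (\<Sum>j\<in>F. if i = j then p i else 0)"
    unfolding sum_distrib_left by (rule sum.cong[OF refl]) (use a in \<open>auto simp: p_orth subset_iff\<close>)
  also have "\<dots> = p i" using a by (simp add: sum.delta)
  finally show ?thesis .
qed

lemma p_sum_idemR: "i \<in> F \<Longrightarrow> F \<subseteq> I \<Longrightarrow> finite F \<Longrightarrow> (\<Sum>j\<in>F. p j) * p i = p i"
proof -
  assume a: "i \<in> F" "F \<subseteq> I" "finite F"
  have "(\<Sum>j\<in>F. p j) * p i = (\<Sum>j\<in>F. if i = j then p i else 0)"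
    unfolding sum_distrib_right by (rule sum.cong[OF refl]) (use a in \<open>auto simp: p_orth subset_iff\<close>)
  also have "\<dots> = p i" using a by (simp add: sum.delta)
  finally show ?thesis .
qed

lemma local_unit:
  "\<exists>F. finite F \<and> F \<subseteq> I \<and> (\<forall>y\<in>set ys. (\<Sum>j\<in>F. p j) * Phi y = Phi y \<and> Phi y * (\<Sum>j\<in>F. p j) = Phi y)"
proof -
  obtain FF cc where R: "\<forall>y. finite (FF y) \<and> FF y \<subseteq> I \<and> Phi y = (\<Sum>i\<in>FF y. sA (cc y i) (p i))"
    using Phi_rep_all by blast
  define F where "F = (\<Union>y\<in>set ys. FF y)"
  have F: "finite F" "F \<subseteq> I" using R unfolding F_def by auto
  have "(\<Sum>j\<in>F. p j) * Phi y = Phi y \<and> Phi y * (\<Sum>j\<in>F. p j) = Phi y" if y: "y \<in> set ys" for y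
  proof -
    have sub: "FF y \<subseteq> F" using y unfolding F_def by auto
    have "(\<Sum>j\<in>F. p j) * Phi y = (\<Sum>i\<in>FF y. sA (cc y i) ((\<Sum>j\<in>F. p j) * p i))"
      using R by (simp add: sum_distrib_left)
    also have "\<dots> = (\<Sum>i\<in>FF y. sA (cc y i) (p i))"
      by (rule sum.cong[OF refl]) (use sub F in \<open>auto simp: p_sum_idemR\<close>)
    also have "\<dots> = Phi y" using R by simp
    finally have 1: "(\<Sum>j\<in>F. p j) * Phi y = Phi y" .
    have "Phi y * (\<Sum>j\<in>F. p j) = (\<Sum>i\<in>FF y. sA (cc y i) (p i * (\<Sum>j\<in>F. p j)))"
      using R by (simp add: sum_distrib_right)
    also have "\<dots> = (\<Sum>i\<in>FF y. sA (cc y i) (p i))"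
      by (rule sum.cong[OF refl]) (use sub F in \<open>auto simp: p_sum_idemL\<close>)
    also have "\<dots> = Phi y" using R by simp
    finally show ?thesis using 1 by simp
  qed
  then show ?thesis using F by blast
qed

lemma sum_galois_single: "galois_map \<alpha> [(y, a)] = map (\<lambda>(c,g). (y * c, g)) (\<alpha> a)"
  unfolding galois_map_def by (induction "\<alpha> a") auto

lemma exists_phi1: "\<exists>h. \<phi> h = 1"
proof -
  obtain h where "\<phi> h \<noteq> 0" using phi_nz by blast
  then have "\<phi> (sH (inverse (\<phi> h)) h) = 1" by simp
  then show ?thesis by blast
qed

lemma AB: "\<exists>F. finite F \<and> F \<subseteq> I \<and> a = (\<Sum>j\<in>F. a * p j)"
proof -
  obtain h0 where h0: "\<phi> h0 = 1" using exists_phi1 by blast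
  obtain xs where xs: "teq2 sA sH (galois_map \<alpha> xs) [(a, h0)]" using gal_surj by blast
  have "a = (\<Sum>(x,y)\<leftarrow>xs. x * Phi y)"
    using teq2_bil[OF xs vsA bil_phiA] h0
    by (simp add: sum_galois Phi_def sum_list_left_mult)
  moreover obtain F where F: "finite F" "F \<subseteq> I"
    "\<forall>y\<in>set (map snd xs). Phi y * (\<Sum>j\<in>F. p j) = Phi y"
    using local_unit[of "map snd xs"] by blast
  ultimately have "a * (\<Sum>j\<in>F. p j) = a"
    by (simp add: sum_list_right_mult mult.assoc)
      (rule sum_list_cong2, use F(3) in \<open>force\<close>)
  then show ?thesis using F by (metis sum_distrib_left)
qed

lemma BA_zero:
  assumes n: "n = (\<Sum>(x,y)\<leftarrow>xs. Phi x * y)" and z: "\<forall>j\<in>I. p j * n = 0"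
  shows "n = 0"
proof -
  obtain F where F: "finite F" "F \<subseteq> I"
    "\<forall>y\<in>set (map fst xs). (\<Sum>j\<in>F. p j) * Phi y = Phi y"
    using local_unit[of "map fst xs"] by blast
  have "(\<Sum>j\<in>F. p j) * n = n"
    unfolding n by (simp add: sum_list_left_mult mult.assoc[symmetric])
      (rule sum_list_cong2, use F(3) in \<open>force\<close>)
  moreover have "(\<Sum>j\<in>F. p j) * n = 0"
    using z F(2) by (simp add: sum_distrib_right subset_iff)
  ultimately show ?thesis by simp
qed

end



context gal_ctx begin

lemma KI:
  assumes l: "lin sA sA ell" and lm: "\<And>x c. ell (x * c) = ell x * c"
    and xs: "teq2 sA sH (galois_map \<alpha> xs) zs"
  shows "(\<Sum>(x,y)\<leftarrow>xs. Phi (ell x) * y) = (\<Sum>(z,h)\<leftarrow>zs. \<Sum>(c,g)\<leftarrow>\<alpha> (ell z). sA (\<phi> (g * S h)) c)"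
proof -
  have bG: "bil sA sH sA (\<lambda>c t. sA (\<phi> (t * S g)) c)" for g
    by (rule bilI) (simp_all add: asimps)
  define F where "F z g = (\<Sum>(c,t)\<leftarrow>\<alpha> (ell z). sA (\<phi> (t * S g)) c)" for z g
  have bF: "bil sA sH sA F"
    by (rule bilI) (simp_all add: F_def lin_add[OF l] lin_scale[OF l] Asum_add[OF vsA bG]
        Asum_scale[OF vsA bG] asimps sum_list_add2 sA_sum)
  have "(\<Sum>(u,v)\<leftarrow>galois_map \<alpha> xs. F u v) = (\<Sum>(u,v)\<leftarrow>zs. F u v)"
    by (rule teq2_bil[OF xs vsA bF])
  moreover have "(\<Sum>(u,v)\<leftarrow>galois_map \<alpha> xs. F u v) = (\<Sum>(x,y)\<leftarrow>xs. Phi (ell x) * y)"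
    unfolding sum_galois
  proof (rule sum_list_cong2)
    fix x y
    define tau where "tau u2 t2 g = (\<Sum>(u1,t1)\<leftarrow>\<alpha> (ell x). sA (\<phi> (t1 * t2 * S g)) (u1 * u2))" for u2 t2 g
    have tr: "tril sA sH sH sA tau"
      by (rule trilI) (simp_all add: tau_def asimps sum_list_add2 sA_sum)
    have "(\<Sum>(c,h)\<leftarrow>\<alpha> y. F (x * c) h) = (\<Sum>(c,g)\<leftarrow>\<alpha> y. \<Sum>(u1,t1)\<leftarrow>\<alpha> (ell x). \<Sum>(u2,t2)\<leftarrow>\<alpha> c. sA (\<phi> (t1 * t2 * S g)) (u1 * u2))"
      by (simp add: F_def lm Asum_mult[OF vsA bG] mult.assoc)
    also have "\<dots> = (\<Sum>(c,g)\<leftarrow>\<alpha> y. \<Sum>(u2,t2)\<leftarrow>\<alpha> c. tau u2 t2 g)"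
      unfolding tau_def by (rule sum_list_cong2) (rule sum_list_swap)
    also have "\<dots> = (\<Sum>(c,g)\<leftarrow>\<alpha> y. \<Sum>(g1,g2)\<leftarrow>\<Delta> g. tau c g1 g2)"
      by (rule Acoass[OF vsA tr])
    also have "\<dots> = (\<Sum>(c,g)\<leftarrow>\<alpha> y. \<Sum>(u1,t1)\<leftarrow>\<alpha> (ell x). sA (\<phi> (t1 * (\<Sum>(g1,g2)\<leftarrow>\<Delta> g. g1 * S g2))) (u1 * c))"
      unfolding tau_def
      by (rule sum_list_cong2, subst sum_list_swap)
        (simp add: sum_list_left_mult phi_sum sA_sum_left mult.assoc)
    also have "\<dots> = (\<Sum>(c,g)\<leftarrow>\<alpha> y. Phi (ell x) * sA (\<epsilon> g) c)"
      by (simp add: antipR Phi_def sum_list_right_mult sA_sum)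
    also have "\<dots> = Phi (ell x) * (\<Sum>(c,g)\<leftarrow>\<alpha> y. sA (\<epsilon> g) c)"
      by (simp add: sum_list_left_mult)
    also have "\<dots> = Phi (ell x) * y" by (simp add: a_counit)
    finally show "(\<Sum>(c,h)\<leftarrow>\<alpha> y. F (x * c) h) = Phi (ell x) * y" .
  qed
  ultimately show ?thesis unfolding F_def by simp
qed

lemma alpha_zero:
  assumes z: "\<forall>k. (\<Sum>(c,g)\<leftarrow>\<alpha> n. sA (\<phi> (g * k)) c) = 0"
  shows "n = 0"
proof -
  obtain E lam where E: "finite E" "\<forall>e. lin sA (*) (lam e)"
    "\<forall>u\<in>fst ` set (\<alpha> n). u = (\<Sum>e\<in>E. sA (lam e u) e)"
    using decomp[OF vsA, of "fst ` set (\<alpha> n)"] by auto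
  have m0: "(\<Sum>(c,g)\<leftarrow>\<alpha> n. sH (lam e c) g) = 0" for e
  proof (rule NL, rule allI)
    fix k
    have "\<phi> ((\<Sum>(c,g)\<leftarrow>\<alpha> n. sH (lam e c) g) * k) = (\<Sum>(c,g)\<leftarrow>\<alpha> n. lam e c * \<phi> (g * k))"
      by (simp add: sum_list_right_mult phi_sum)
    also have "\<dots> = lam e (\<Sum>(c,g)\<leftarrow>\<alpha> n. sA (\<phi> (g * k)) c)"
      by (simp add: lin_sum_list2[OF E(2)[rule_format, of e]] lin_scale[OF E(2)[rule_format, of e]] mult.commute)
    also have "\<dots> = 0" using z lin_zero[OF E(2)[rule_format, of e]] by simp
    finally show "\<phi> ((\<Sum>(c,g)\<leftarrow>\<alpha> n. sH (lam e c) g) * k) = 0" .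
  qed
  have "n = (\<Sum>(c,g)\<leftarrow>\<alpha> n. sA (\<epsilon> g) c)" by (simp add: a_counit)
  also have "\<dots> = (\<Sum>e\<in>E. sA (\<epsilon> (\<Sum>(c,g)\<leftarrow>\<alpha> n. sH (lam e c) g)) e)"
    by (rule decomp_sum[OF E(1)]) (use E(3) in \<open>auto simp: asimps\<close>)
  also have "\<dots> = 0" using m0 by simp
  finally show ?thesis .
qed

end



context gal_ctx begin

lemma lin_id: "lin sA sA (\<lambda>x. x)" unfolding lin_def by simp
lemma lin_lmult: "lin sA sA (\<lambda>x. a * x)" unfolding lin_def by (simp add: distrib_left)

lemma S_phi_zero:
  assumes "\<forall>h. (\<Sum>(c,g)\<leftarrow>\<alpha> n. sA (\<phi> (g * S h)) c) = 0"
  shows "n = 0"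
proof (rule alpha_zero, rule allI)
  fix k obtain h where "S h = k" using S_surj by blast
  then show "(\<Sum>(c,g)\<leftarrow>\<alpha> n. sA (\<phi> (g * k)) c) = 0" using assms by blast
qed

lemma claimL:
  assumes "\<forall>x. phi_A sA \<alpha> \<phi> I p (a * x) = 0"
  shows "a = 0"
proof -
  have P: "Phi (a * x) = 0" for x using phiA_zero_left[OF assms] .
  have az: "a * z = 0" for z
  proof (rule S_phi_zero, rule allI)
    fix h
    obtain xs where xs: "teq2 sA sH (galois_map \<alpha> xs) [(z, h)]" using gal_surj by blast
    have "(\<Sum>(x,y)\<leftarrow>xs. Phi (a * x) * y) = (\<Sum>(z,h)\<leftarrow>[(z, h)]. \<Sum>(c,g)\<leftarrow>\<alpha> (a * z). sA (\<phi> (g * S h)) c)"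
      by (rule KI[OF lin_lmult _ xs]) (simp add: mult.assoc)
    then show "(\<Sum>(c,g)\<leftarrow>\<alpha> (a * z). sA (\<phi> (g * S h)) c) = 0" using P by simp
  qed
  obtain F where F: "a = (\<Sum>j\<in>F. a * p j)" using AB by blast
  then show ?thesis using az by simp
qed

lemma claimR:
  assumes "\<forall>x. phi_A sA \<alpha> \<phi> I p (x * a) = 0"
  shows "a = 0"
proof -
  have P: "Phi (x * a) = 0" for x using phiA_zero_right[OF assms] .
  have b: "(\<Sum>(c,g)\<leftarrow>\<alpha> a. sA (\<phi> (h * g)) (y * c)) = 0" for y h
  proof -
    obtain xs where xs: "teq2 sA sH (galois_map \<alpha> xs) [(y, h)]" using gal_surj by blast
    define F where "F u g' = (\<Sum>(c,g)\<leftarrow>\<alpha> a. sA (\<phi> (g' * g)) (u * c))" for u g'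
    have bF: "bil sA sH sA F"
      by (rule bilI) (simp_all add: F_def asimps sum_list_add2 sA_sum)
    have "(\<Sum>(u,v)\<leftarrow>galois_map \<alpha> xs. F u v) = (\<Sum>(u,v)\<leftarrow>[(y, h)]. F u v)"
      by (rule teq2_bil[OF xs vsA bF])
    moreover have "(\<Sum>(u,v)\<leftarrow>galois_map \<alpha> xs. F u v) = (\<Sum>(x,y')\<leftarrow>xs. x * Phi (y' * a))"
      unfolding sum_galois
    proof (rule sum_list_cong2)
      fix x y'
      show "(\<Sum>(c,h)\<leftarrow>\<alpha> y'. F (x * c) h) = x * Phi (y' * a)"
        by (simp add: F_def Phi_def Asum_mult[OF vsA bil_phiA] sum_list_left_mult mult.assoc)
    qed
    ultimately show ?thesis using P by (simp add: F_def)
  qed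
  have c: "teq2 sA sH (map (\<lambda>(c,g). (y * c, g)) (\<alpha> a)) []" for y
  proof -
    define L where "L = map (\<lambda>(c,g). (y * c, g)) (\<alpha> a)"
    obtain E lam where E: "finite E" "\<forall>e. lin sA (*) (lam e)"
      "\<forall>u\<in>fst ` set L. u = (\<Sum>e\<in>E. sA (lam e u) e)"
      using decomp[OF vsA, of "fst ` set L"] by auto
    have m0: "(\<Sum>(u,v)\<leftarrow>L. sH (lam e u) v) = 0" for e
    proof (rule NR, rule allI)
      fix k
      have "\<phi> (k * (\<Sum>(u,v)\<leftarrow>L. sH (lam e u) v)) = (\<Sum>(u,v)\<leftarrow>L. lam e u * \<phi> (k * v))"
        by (simp add: sum_list_left_mult phi_sum)
      also have "\<dots> = lam e (\<Sum>(u,v)\<leftarrow>L. sA (\<phi> (k * v)) u)"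
        by (simp add: lin_sum_list2[OF E(2)[rule_format, of e]] lin_scale[OF E(2)[rule_format, of e]] mult.commute)
      also have "(\<Sum>(u,v)\<leftarrow>L. sA (\<phi> (k * v)) u) = 0"
        unfolding L_def using b[of k y] by (simp add: split_def o_def)
      finally show "\<phi> (k * (\<Sum>(u,v)\<leftarrow>L. sH (lam e u) v)) = 0"
        using lin_zero[OF E(2)[rule_format, of e]] by simp
    qed
    show ?thesis unfolding teq2_def
    proof (intro allI impI)
      fix f assume f: "bilin sA sH f"
      have l1: "lin sA (*) (\<lambda>u. f u v)" for v using f unfolding bilin_def by blast
      have l2: "lin sH (*) (f u)" for u using f unfolding bilin_def by blast
      have "(\<Sum>(u,v)\<leftarrow>L. f u v) = (\<Sum>e\<in>E. f e (\<Sum>(u,v)\<leftarrow>L. sH (lam e u) v))"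
        by (rule decomp_sum[OF E(1)]) (use E(3) in \<open>auto simp: lin_add[OF l1] lin_add[OF l2] lin_scale[OF l1] lin_scale[OF l2]\<close>)
      also have "\<dots> = 0" using m0 lin_zero[OF l2] by simp
      finally show "(\<Sum>(u,v)\<leftarrow>map (\<lambda>(c,g). (y * c, g)) (\<alpha> a). f u v) = (\<Sum>(u,v)\<leftarrow>[]. f u v)"
        unfolding L_def by simp
    qed
  qed
  have d: "y * a = 0" for y
  proof -
    have "teq2 sA sH (galois_map \<alpha> [(y, a)]) (galois_map \<alpha> [])"
      using c[of y] by (simp add: sum_galois_single galois_map_def)
    then have B: "teqB sA coinvA [(y, a)] []" by (rule gal_inj)
    show ?thesis
    proof (rule lin_sep[OF vsA])
      fix l assume l: "lin sA (*) l"
      have "bilin sA sA (\<lambda>x z. l (x * z))"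
        unfolding bilin_def lin_def by (simp add: lin_add[OF l] lin_scale[OF l] distrib_left distrib_right)
      moreover have "\<forall>b\<in>coinvA. \<forall>x z. l (x * b * z) = l (x * (b * z))" by (simp add: mult.assoc)
      ultimately have "(\<Sum>(x,z)\<leftarrow>[(y,a)]. l (x * z)) = (\<Sum>(x,z)\<leftarrow>[]. l (x * z))"
        using B unfolding teqB_def by blast
      then have "l (y * a) = 0" by simp
      then show "l (y * a) = l 0" using lin_zero[OF l] by simp
    qed
  qed
  have e: "(\<Sum>(c,g)\<leftarrow>\<alpha> a. sA (\<phi> (g * S h)) c) = 0" for h
  proof -
    obtain xs where xs: "teq2 sA sH (galois_map \<alpha> xs) [(a, h)]" using gal_surj by blast
    have r: "(\<Sum>(x,y)\<leftarrow>xs. Phi x * y) = (\<Sum>(c,g)\<leftarrow>\<alpha> a. sA (\<phi> (g * S h)) c)"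
      using KI[OF lin_id _ xs] by simp
    have "p j * (\<Sum>(c,g)\<leftarrow>\<alpha> a. sA (\<phi> (g * S h)) c) = 0" for j
    proof -
      have bG: "bil sA sH sA (\<lambda>u g. sA (\<phi> (g * S h)) u)" by (rule bilI) (simp_all add: asimps)
      have "p j * (\<Sum>(c,g)\<leftarrow>\<alpha> a. sA (\<phi> (g * S h)) c) = (\<Sum>(u,g)\<leftarrow>map (\<lambda>(c,g). (p j * c, g)) (\<alpha> a). sA (\<phi> (g * S h)) u)"
        by (simp add: split_def o_def sum_list_const_mult[symmetric])
      also have "\<dots> = 0" using teq2_bil[OF c vsA bG] by simp
      finally show ?thesis .
    qed
    then show ?thesis using BA_zero[OF r[symmetric]] by blast
  qed
  show ?thesis by (rule S_phi_zero) (use e in blast)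
qed

lemma claim3: "(\<Sum>(x,h)\<leftarrow>\<alpha> a. sH (phi_A sA \<alpha> \<phi> I p x) h) = sH (phi_A sA \<alpha> \<phi> I p a) \<delta>"
proof -
  have l: "lin sA (*) lam0" by (rule lam0_lin)
  define tau where "tau y g h = sH (lam0 y * \<phi> g) h" for y g h
  have tr: "tril sA sH sH sH tau"
    by (rule trilI) (simp_all add: tau_def hsimps lin_add[OF l] lin_scale[OF l])
  have "(\<Sum>(x,h)\<leftarrow>\<alpha> a. sH (phi_A sA \<alpha> \<phi> I p x) h) = (\<Sum>(x,h)\<leftarrow>\<alpha> a. \<Sum>(y,g)\<leftarrow>\<alpha> x. tau y g h)"
    by (rule sum_list_cong2)
      (simp add: phiA_eq Phi_def tau_def lin_sum_list2[OF l] lin_scale[OF l] sH_sum_left mult.commute)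
  also have "\<dots> = (\<Sum>(x,h)\<leftarrow>\<alpha> a. \<Sum>(h1,h2)\<leftarrow>\<Delta> h. tau x h1 h2)"
    by (rule Acoass[OF vsH tr])
  also have "\<dots> = (\<Sum>(x,h)\<leftarrow>\<alpha> a. sH (lam0 x) (\<Sum>(h1,h2)\<leftarrow>\<Delta> h. sH (\<phi> h1) h2))"
    by (rule sum_list_cong2) (simp add: tau_def sH_sum)
  also have "\<dots> = (\<Sum>(x,h)\<leftarrow>\<alpha> a. sH (lam0 x * \<phi> h) \<delta>)"
    by (simp add: phi_left)
  also have "\<dots> = sH (phi_A sA \<alpha> \<phi> I p a) \<delta>"
    by (simp add: phiA_eq Phi_def lin_sum_list2[OF l] lin_scale[OF l] sH_sum_left mult.commute)
  finally show ?thesis .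
qed

end

theorem mainTheorem16:
  fixes sH :: "'k::field \<Rightarrow> 'h::ring_1 \<Rightarrow> 'h"
    and sA :: "'k \<Rightarrow> 'a::ring \<Rightarrow> 'a"
    and \<Delta> :: "'h \<Rightarrow> ('h \<times> 'h) list" and \<epsilon> :: "'h \<Rightarrow> 'k" and S :: "'h \<Rightarrow> 'h"
    and \<phi> :: "'h \<Rightarrow> 'k" and \<delta> :: 'h
    and \<alpha> :: "'a \<Rightarrow> ('a \<times> 'h) list" and I :: "'i set" and p :: "'i \<Rightarrow> 'a"
  assumes "hopf_with_integrals sH \<Delta> \<epsilon> S \<phi>"
    and "modular_element sH \<Delta> S \<phi> \<delta>"
    and "I_galois_object sA sH \<Delta> \<epsilon> \<alpha> I p"
  shows "(\<forall>a. (\<forall>a'. phi_A sA \<alpha> \<phi> I p (a * a') = 0) \<longrightarrow> a = 0)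
       \<and> (\<forall>a'. (\<forall>a. phi_A sA \<alpha> \<phi> I p (a * a') = 0) \<longrightarrow> a' = 0)
       \<and> (\<forall>a. (\<Sum>(x,h)\<leftarrow>\<alpha> a. sH (phi_A sA \<alpha> \<phi> I p x) h) = sH (phi_A sA \<alpha> \<phi> I p a) \<delta>)"
  proof -
  interpret G: gal_ctx sH \<Delta> \<epsilon> S \<phi> \<delta> sA \<alpha> I p
    using assms by (simp add: gal_ctx_def hopf_ctx_def gal_ctx_axioms_def)
  show ?thesis using G.claimL G.claimR G.claim3 by blast
qed

end
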